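(* Assume the Slater condition: there is a positive definite $X^0\in\mathbb{S}^n$ with $\mathcal{R}_\alpha(X^0)=\mathcal{R}_\alpha(\overline X)$. If $\rho_m\to0$, $\sqrt m\,\rho_m\to\infty$ and $\gamma_m=O_p(1)$, then $\widehat\Delta_m:=\rho_m^{-1}(\widehat X_m-\overline X)\xrightarrow{p}\widehat\Delta$, where $\widehat\Delta$ is the unique optimal solution of $$\min_{\Delta\in\mathbb{S}^n}\ \frac12\langle\mathcal{Q}_\beta(\Delta),\Delta\rangle+\langle I_n-F(\overline X),\Delta\rangle\quad\text{s.t. }\mathcal{R}_\alpha(\Delta)=0,\ \overline P_2^{\mathbb{T}}\Delta\overline P_2\ \text{positive semidefinite}.$$
   Context: Positive semidefinite setting: $\mathbb{S}^n$ denotes either the real symmetric or the Hermitian $n\times n$ matrices, a real inner product space with $\langle X,Y\rangle=\mathrm{Re}\,\mathrm{Tr}(X^{\mathbb{T}}Y)$ ($^{\mathbb{T}}$ = transpose or conjugate transpose); $\|\cdot\|_F$ is the Frobenius norm. $\{\Theta_1,\dots,\Theta_d\}$ is an orthonormal basis of $\mathbb{S}^n$, $\alpha\subseteq\{1,\dots,d\}$, $\beta$ its complement, $\mathcal{R}_\pi(X)=(\langle\Theta_k,X\rangle)_{k\in\pi}$. Let $p_k>0$ ($k\in\beta$), $\sum_{k\in\beta}p_k=1$, $\mathcal{Q}_\beta(X)=\sum_{k\in\beta}p_k\langle\Theta_k,X\rangle\Theta_k$. The unknown $\overline X$ is positive semidefinite of rank $r\ge1$, with eigendecomposition $\overline X=\overline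 P\mathrm{Diag}(\lambda(\overline X))\overline P^{\mathbb{T}}$, eigenvalues nonincreasing, $\overline P=[\overline P_1\ \overline P_2]$ orthogonal/unitary, $\overline P_1$ having $r$ columns. Observations: $\omega_1,\dots,\omega_m$ i.i.d. with $\Pr(\omega_i=k)=p_k$ for $k\in\beta$, $0$ for $k\in\alpha$; $\xi_i$ i.i.d., independent of the $\omega_i$, $\mathbb{E}\xi_i=0$, $\mathbb{E}\xi_i^2=1$; $\nu>0$; $y_i=\langle\Theta_{\omega_i},\overline X\rangle+\nu\xi_i$; $\mathcal{R}_\Omega(X)=(\langle\Theta_{\omega_i},X\rangle)_{i=1}^m$. $F$ is the spectral operator of a symmetric function $f:\mathbb{R}^n\to\mathbb{R}^n$ ($f(x)=Q^{\mathbb{T}}f(Qx)$ for all signed permutation matrices $Q$); for positive semidefinite $X=P\mathrm{Diag}(\lambda(X))P^{\mathbb{T}}$, $F(X)=P\mathrm{Diag}(f(\lambda(X)))P^{\mathbb{T}}$. Given a positive semidefinite initial estimator $\widetilde X_m$, $\rho_m>0$, $\gamma_m\ge0$, $\widehat X_m$ is an optimal solution of $$\min_{X\in\mathbb{S}^n}\ \frac1{2m}\|y-\mathcal{R}_\Omega(X)\|_2^2+\rho_m\Big(\langle I_n-F(\widetilde X_m),X\rangle+\frac{\gamma_m}2\|X-\widetilde X_m\|_F^2\Big)\ \text{s.t. }\mathcal{R}_\alpha(X)=\mathcal{R}_\alpha(\overline X),\ X\text{ positive semidefinite}.$$ Standing assumptions: $n$ fixed, $m\to\infty$; $F$ continuous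 at $\overline X$; $\widetilde X_m\xrightarrow{p}\overline X$. *)

theory Defs
  imports "HOL-Probability.Probability"
begin

text \<open>The space S^n is either the real symmetric matrices (realcase = True, embedded as
  Hermitian matrices with real entries) or the Hermitian matrices (realcase = False).\<close>

type_synonym 'n cmat = "((complex, 'n) vec, 'n) vec"

definition ctrans :: "('n::finite) cmat \<Rightarrow> 'n cmat" where
  "ctrans A = (\<chi> i j. cnj (A $ j $ i))"

definition herm :: "('n::finite) cmat \<Rightarrow> bool" where
  "herm A \<longleftrightarrow> ctrans A = A"

definition Sn :: "bool \<Rightarrow> ('n::finite) cmat set" where
  "Sn realcase = {X. herm X \<and> (realcase \<longrightarrow> (\<forall>i j. Im (X $ i $ j) = 0))}"

definition mtrace :: "('n::finite) cmat \<Rightarrow> complex" where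
  "mtrace A = (\<Sum>i\<in>UNIV. A $ i $ i)"

definition minner :: "('n::finite) cmat \<Rightarrow> 'n cmat \<Rightarrow> real" where
  "minner X Y = Re (mtrace (ctrans X ** Y))"

definition qform :: "('n::finite) cmat \<Rightarrow> (complex, 'n) vec \<Rightarrow> complex" where
  "qform X v = (\<Sum>i\<in>UNIV. \<Sum>j\<in>UNIV. cnj (v $ i) * X $ i $ j * v $ j)"

definition psd :: "('n::finite) cmat \<Rightarrow> bool" where
  "psd X \<longleftrightarrow> herm X \<and> (\<forall>v. Re (qform X v) \<ge> 0)"

definition pd :: "('n::finite) cmat \<Rightarrow> bool" where
  "pd X \<longleftrightarrow> herm X \<and> (\<forall>v. v \<noteq> 0 \<longrightarrow> Re (qform X v) > 0)"

definition unitary :: "('n::finite) cmat \<Rightarrow> bool" where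
  "unitary P \<longleftrightarrow> ctrans P ** P = mat 1"

definition diagm :: "(real, 'n::finite) vec \<Rightarrow> 'n cmat" where
  "diagm v = (\<chi> i j. if i = j then complex_of_real (v $ i) else 0)"

definition nonincr :: "(real, 'n::{finite,linorder}) vec \<Rightarrow> bool" where
  "nonincr v \<longleftrightarrow> (\<forall>i j. i \<le> j \<longrightarrow> v $ j \<le> v $ i)"

definition eigvals :: "('n::{finite,linorder}) cmat \<Rightarrow> (real, 'n) vec" where
  "eigvals X = (SOME l. nonincr l \<and> (\<exists>P. unitary P \<and> X = P ** diagm l ** ctrans P))"

definition signed_perm :: "((real, 'n::finite) vec, 'n) vec \<Rightarrow> bool" where
  "signed_perm Q \<longleftrightarrow> (\<exists>\<sigma> s. \<sigma> permutes (UNIV::'n set) \<and> (\<forall>i. s i = 1 \<or> s i = -1) \<and>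
      Q = (\<chi> i j. if j = \<sigma> i then s i else 0))"

definition symmetric_fun :: "((real, 'n::finite) vec \<Rightarrow> (real, 'n) vec) \<Rightarrow> bool" where
  "symmetric_fun f \<longleftrightarrow> (\<forall>Q x. signed_perm Q \<longrightarrow> f x = transpose Q *v f (Q *v x))"

definition spectral_op :: "((real, 'n::{finite,linorder}) vec \<Rightarrow> (real, 'n) vec) \<Rightarrow> 'n cmat \<Rightarrow> 'n cmat" where
  "spectral_op f X = (SOME M. \<exists>P. unitary P \<and> X = P ** diagm (eigvals X) ** ctrans P \<and>
      M = P ** diagm (f (eigvals X)) ** ctrans P)"

definition conv_prob :: "'a measure \<Rightarrow> (nat \<Rightarrow> 'a \<Rightarrow> 'b::metric_space) \<Rightarrow> 'b \<Rightarrow> bool" where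
  "conv_prob M Z L \<longleftrightarrow> (\<forall>e>0. (\<lambda>m. measure M {w\<in>space M. dist (Z m w) L > e}) \<longlonglongrightarrow> 0)"

definition bounded_prob :: "'a measure \<Rightarrow> (nat \<Rightarrow> 'a \<Rightarrow> real) \<Rightarrow> bool" where
  "bounded_prob M g \<longleftrightarrow> (\<forall>e>0. \<exists>K N. \<forall>m\<ge>N. measure M {w\<in>space M. \<bar>g m w\<bar> > K} < e)"

text \<open>Index of an element of 'n in the linear order (0-based); the first r columns of P
  are those with index < r.\<close>
definition pos :: "'n::{finite,linorder} \<Rightarrow> nat" where
  "pos i = card {j. j < i}"

text \<open>The (n-r) x (n-r) matrix P_2^T D P_2, padded with zeros to an n x n matrix.\<close>
definition lower_block :: "nat \<Rightarrow> ('n::{finite,linorder}) cmat \<Rightarrow> 'n cmat \<Rightarrow> 'n cmat" where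
  "lower_block r P D = (\<chi> i j. if r \<le> pos i \<and> r \<le> pos j then (ctrans P ** D ** P) $ i $ j else 0)"

definition Qbeta :: "(nat \<Rightarrow> ('n::finite) cmat) \<Rightarrow> nat set \<Rightarrow> (nat \<Rightarrow> real) \<Rightarrow> 'n cmat \<Rightarrow> 'n cmat" where
  "Qbeta \<Theta> \<beta> p X = (\<Sum>k\<in>\<beta>. (p k * minner (\<Theta> k) X) *\<^sub>R \<Theta> k)"

definition est_obj :: "(nat \<Rightarrow> ('n::{finite,linorder}) cmat) \<Rightarrow> ((real, 'n) vec \<Rightarrow> (real, 'n) vec) \<Rightarrow> nat
    \<Rightarrow> (nat \<Rightarrow> real) \<Rightarrow> (nat \<Rightarrow> nat) \<Rightarrow> real \<Rightarrow> real \<Rightarrow> 'n cmat \<Rightarrow> 'n cmat \<Rightarrow> real" where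
  "est_obj \<Theta> f m y om rho gam Xt X =
     (1 / (2 * real m)) * (\<Sum>i<m. (y i - minner (\<Theta> (om i)) X)\<^sup>2)
     + rho * (minner (mat 1 - spectral_op f Xt) X + gam / 2 * (norm (X - Xt))\<^sup>2)"

definition limit_obj :: "(nat \<Rightarrow> ('n::{finite,linorder}) cmat) \<Rightarrow> nat set \<Rightarrow> (nat \<Rightarrow> real)
    \<Rightarrow> ((real, 'n) vec \<Rightarrow> (real, 'n) vec) \<Rightarrow> 'n cmat \<Rightarrow> 'n cmat \<Rightarrow> real" where
  "limit_obj \<Theta> \<beta> p f Xbar D = 1/2 * minner (Qbeta \<Theta> \<beta> p D) D + minner (mat 1 - spectral_op f Xbar) D"

end

theory Submission
  imports Defs
begin









lemma minner_inner: "minner X Y = inner X Y"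
proof -
  have "minner X Y = Re (\<Sum>i\<in>UNIV. \<Sum>k\<in>UNIV. cnj (X $ k $ i) * Y $ k $ i)"
    unfolding minner_def mtrace_def ctrans_def by (simp add: matrix_matrix_mult_def)
  also have "\<dots> = (\<Sum>i\<in>UNIV. \<Sum>k\<in>UNIV. Re (cnj (X $ k $ i) * Y $ k $ i))"
    by (simp add: Re_sum)
  also have "\<dots> = (\<Sum>k\<in>UNIV. \<Sum>i\<in>UNIV. Re (cnj (X $ k $ i) * Y $ k $ i))"
    by (rule sum.swap)
  also have "\<dots> = inner X Y"
    unfolding inner_vec_def by (simp add: inner_complex_def)
  finally show ?thesis .
qed

lemma ctrans_ctrans[simp]: "ctrans (ctrans A) = A"
  by (simp add: ctrans_def vec_eq_iff)
lemma ctrans_mult: "ctrans (A ** B) = ctrans B ** ctrans A"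
  by (simp add: ctrans_def vec_eq_iff matrix_matrix_mult_def mult.commute)
lemma ctrans_add: "ctrans (A + B) = ctrans A + ctrans B"
  by (simp add: ctrans_def vec_eq_iff)
lemma ctrans_diff: "ctrans (A - B) = ctrans A - ctrans B"
  by (simp add: ctrans_def vec_eq_iff)
lemma ctrans_scaleR: "ctrans (c *\<^sub>R A) = c *\<^sub>R ctrans A"
  by (simp add: ctrans_def vec_eq_iff)
lemma ctrans_zero[simp]: "ctrans 0 = 0"
  by (simp add: ctrans_def vec_eq_iff)
lemma ctrans_mat1[simp]: "ctrans (mat 1) = mat 1"
  by (simp add: ctrans_def vec_eq_iff mat_def)

lemma unitary_right: "unitary P \<Longrightarrow> P ** ctrans P = mat 1"
  unfolding unitary_def using matrix_left_right_inverse by blast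

lemma herm_add: "herm A \<Longrightarrow> herm B \<Longrightarrow> herm (A + B)"
  by (simp add: herm_def ctrans_add)
lemma herm_diff: "herm A \<Longrightarrow> herm B \<Longrightarrow> herm (A - B)"
  by (simp add: herm_def ctrans_diff)
lemma herm_scaleR: "herm A \<Longrightarrow> herm (c *\<^sub>R A)"
  by (simp add: herm_def ctrans_scaleR)

lemma Sn_add: "A \<in> Sn b \<Longrightarrow> B \<in> Sn b \<Longrightarrow> A + B \<in> Sn b"
  by (simp add: Sn_def herm_add)
lemma Sn_diff: "A \<in> Sn b \<Longrightarrow> B \<in> Sn b \<Longrightarrow> A - B \<in> Sn b"
  by (simp add: Sn_def herm_diff)
lemma Sn_scaleR: "A \<in> Sn b \<Longrightarrow> c *\<^sub>R A \<in> Sn b"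
  by (simp add: Sn_def herm_scaleR)
lemma Sn_zero: "0 \<in> Sn b"
  by (simp add: Sn_def herm_def)

lemma qform_alt: "qform X v = (\<Sum>i\<in>UNIV. cnj (v $ i) * (X *v v) $ i)"
  by (simp add: qform_def matrix_vector_mult_def sum_distrib_left mult.assoc)

lemma qform_add: "qform (A + B) v = qform A v + qform B v"
  by (simp add: qform_def sum.distrib distrib_left distrib_right)
lemma qform_diff: "qform (A - B) v = qform A v - qform B v"
  by (simp add: qform_def sum_subtractf left_diff_distrib right_diff_distrib)
lemma qform_scaleR: "qform (c *\<^sub>R A) v = of_real c * qform A v"
  by (simp add: qform_def sum_distrib_left scaleR_conv_of_real[where 'a=complex] mult_ac)

lemma qform_conj: "qform (ctrans P ** D ** P) v = qform D (P *v v)"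
proof -
  have "qform (ctrans P ** D ** P) v = (\<Sum>i\<in>UNIV. cnj (v $ i) * ((ctrans P ** D ** P) *v v) $ i)"
    by (rule qform_alt)
  also have "\<dots> = (\<Sum>i\<in>UNIV. cnj (v $ i) * (ctrans P *v (D *v (P *v v))) $ i)"
    by (simp add: matrix_vector_mul_assoc matrix_mul_assoc)
  also have "\<dots> = (\<Sum>i\<in>UNIV. \<Sum>j\<in>UNIV. cnj (v $ i) * (cnj (P $ j $ i) * (D *v (P *v v)) $ j))"
    by (simp add: matrix_vector_mult_def ctrans_def sum_distrib_left)
  also have "\<dots> = (\<Sum>j\<in>UNIV. \<Sum>i\<in>UNIV. cnj (v $ i) * (cnj (P $ j $ i) * (D *v (P *v v)) $ j))"
    by (rule sum.swap)
  also have "\<dots> = (\<Sum>j\<in>UNIV. cnj ((P *v v) $ j) * (D *v (P *v v)) $ j)"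
    by (simp add: matrix_vector_mult_def sum_distrib_right mult_ac)
  also have "\<dots> = qform D (P *v v)" by (simp add: qform_alt)
  finally show ?thesis .
qed

lemma qform_diagm: "qform (diagm l) v = of_real (\<Sum>i\<in>UNIV. l $ i * (cmod (v $ i))\<^sup>2)"
proof -
  have "qform (diagm l) v = (\<Sum>i\<in>UNIV. cnj (v $ i) * of_real (l $ i) * v $ i)"
    unfolding qform_def diagm_def by (simp add: if_distrib if_distribR sum.delta cong: if_cong)
  also have "\<dots> = (\<Sum>i\<in>UNIV. of_real (l $ i * (cmod (v $ i))\<^sup>2))"
    by (intro sum.cong refl) (simp add: complex_norm_square mult_ac del: of_real_power)
  finally show ?thesis by simp
qed

lemma psd_add: "psd A \<Longrightarrow> psd B \<Longrightarrow> psd (A + B)"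
  by (auto simp: psd_def herm_add qform_add)
lemma psd_scaleR: "psd A \<Longrightarrow> c \<ge> 0 \<Longrightarrow> psd (c *\<^sub>R A)"
  by (auto simp: psd_def herm_scaleR qform_scaleR)



lemma rank_mul_le_right_gen:
  fixes A B :: "'a::field^'n^'n"
  shows "rank (A ** B) \<le> rank B"
proof -
  have "rows (A ** B) \<subseteq> vec.span (rows B)"
  proof
    fix x assume "x \<in> rows (A ** B)"
    then obtain i where x: "x = row i (A ** B)" unfolding rows_def by blast
    have "x = (\<Sum>k\<in>UNIV. A $ i $ k *s row k B)"
      by (simp add: x row_def matrix_matrix_mult_def vec_eq_iff sum_component)
    also have "\<dots> \<in> vec.span (rows B)"
      by (intro vec.span_sum vec.span_scale vec.span_base) (unfold rows_def, blast)
    finally show "x \<in> vec.span (rows B)" .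
  qed
  then have "vec.dim (rows (A ** B)) \<le> vec.dim (vec.span (rows B))"
    by (rule vec.dim_subset)
  then show ?thesis by (simp add: row_rank_def_gen)
qed

lemma rank_mul_le_left_gen:
  fixes A B :: "'a::field^'n^'n"
  shows "rank (A ** B) \<le> rank A"
proof -
  have ri: "row i (A ** B) = transpose B *v row i A" for i
    by (simp add: row_def matrix_matrix_mult_def matrix_vector_mult_def transpose_def vec_eq_iff mult.commute)
  have "rows (A ** B) \<subseteq> (\<lambda>x. transpose B *v x) ` rows A"
    unfolding rows_def using ri by blast
  then have "vec.dim (rows (A ** B)) \<le> vec.dim ((\<lambda>x. transpose B *v x) ` rows A)"
    by (rule vec.dim_subset)
  also have "\<dots> \<le> vec.dim (rows A)"
    by (rule vec.dim_image_le[OF matrix_vector_mul_linear_gen])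
  finally have "vec.dim (rows (A ** B)) \<le> vec.dim (rows A)" .
  then show ?thesis by (simp add: row_rank_def_gen)
qed

lemma rank_diag:
  fixes l :: "'a::field^'n"
  shows "rank ((\<chi> i j. if i = j then l $ i else 0) :: 'a^'n^'n) = card {i. l $ i \<noteq> 0}"
proof -
  let ?D = "(\<chi> i j. if i = j then l $ i else 0) :: 'a^'n^'n"
  let ?B = "(\<lambda>i. axis i (1::'a)) ` {i. l $ i \<noteq> 0}"
  have rowi: "row i ?D = l $ i *s axis i 1" for i
    by (simp add: row_def vec_eq_iff axis_def)
  have "rows ?D \<subseteq> vec.span ?B"
  proof
    fix x assume "x \<in> rows ?D"
    then obtain i where "x = row i ?D" unfolding rows_def by blast
    then have x: "x = l $ i *s axis i 1" by (simp add: rowi)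
    show "x \<in> vec.span ?B"
    proof (cases "l $ i = 0")
      case True then show ?thesis by (simp add: x vec.span_zero)
    next
      case False then show ?thesis
        unfolding x by (intro vec.span_scale vec.span_base) blast
    qed
  qed
  moreover have "?B \<subseteq> vec.span (rows ?D)"
  proof
    fix x assume "x \<in> ?B"
    then obtain i where i: "l $ i \<noteq> 0" and x: "x = axis i 1" by auto
    have "inverse (l $ i) *s row i ?D = (inverse (l $ i) * l $ i) *s axis i 1" by (simp add: rowi)
    also have "\<dots> = x" using i by (simp add: x)
    finally have "x = inverse (l $ i) *s row i ?D" by simp
    also have "\<dots> \<in> vec.span (rows ?D)"
      by (intro vec.span_scale vec.span_base) (unfold rows_def, blast)
    finally show "x \<in> vec.span (rows ?D)" .
  qed
  ultimately have "vec.span (rows ?D) = vec.span ?B" by (simp add: vec.span_eq)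
  then have "vec.dim (rows ?D) = vec.dim ?B" using vec.dim_span[of "rows ?D"] vec.dim_span[of ?B] by simp
  moreover have "vec.independent ?B"
    by (rule vec.independent_mono[OF vec.independent_Basis]) (unfold cart_basis_def, blast)
  moreover have "card ?B = card {i. l $ i \<noteq> 0}"
    by (rule card_image) (simp add: inj_on_def axis_eq_axis)
  ultimately show ?thesis by (simp add: row_rank_def_gen vec.dim_eq_card_independent)
qed



lemma exists_sorting_bij:
  fixes g :: "'n::{finite,linorder} \<Rightarrow> real"
  shows "\<exists>\<sigma>::'n\<Rightarrow>'n. bij \<sigma> \<and> (\<forall>i j. i \<le> j \<longrightarrow> g (\<sigma> j) \<le> g (\<sigma> i))"
proof -
  define xs where "xs = sorted_list_of_set (UNIV::'n set)"
  define ys where "ys = sort_key (\<lambda>i. - g i) xs"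
  have dxs: "distinct xs" and sxs: "set xs = UNIV" and srt: "sorted_wrt (<) xs"
    unfolding xs_def by (simp_all add: strict_sorted_list_of_set)
  have dys: "distinct ys" and sys: "set ys = UNIV" and lys: "length ys = length xs"
    unfolding ys_def using dxs sxs by (simp_all add: distinct_sort)
  have sk: "sorted (map (\<lambda>i. - g i) ys)" by (simp add: ys_def)
  define idx where "idx i = (THE k. k < length xs \<and> xs ! k = i)" for i
  have idx: "idx i < length xs \<and> xs ! idx i = i" for i
  proof -
    have "\<exists>!k. k < length xs \<and> xs ! k = i" using distinct_Ex1[OF dxs, of i] sxs by auto
    then show ?thesis unfolding idx_def by (rule theI')
  qed
  define \<sigma> where "\<sigma> i = ys ! idx i" for i
  have inj: "inj \<sigma>"
  proof (rule injI)
    fix a b assume "\<sigma> a = \<sigma> b"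
    then have e: "ys ! idx a = ys ! idx b" unfolding \<sigma>_def .
    have la: "idx a < length ys" "idx b < length ys" using idx[of a] idx[of b] lys by auto
    have "idx a = idx b" using nth_eq_iff_index_eq[OF dys la] e by blast
    then have "xs ! idx a = xs ! idx b" by (rule arg_cong)
    then show "a = b" using conjunct2[OF idx[of a]] conjunct2[OF idx[of b]] by argo
  qed
  have "surj \<sigma>" by (rule finite_UNIV_inj_surj[OF _ inj]) simp
  with inj have "bij \<sigma>" unfolding bij_def by blast
  moreover have "g (\<sigma> j) \<le> g (\<sigma> i)" if "i \<le> j" for i j
  proof -
    have "idx i \<le> idx j"
    proof (rule ccontr)
      assume "\<not> idx i \<le> idx j"
      then have "xs ! idx j < xs ! idx i"
        using idx[of i] idx[of j] by (intro sorted_wrt_nth_less[OF srt]) auto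
      then have "j < i" using conjunct2[OF idx[of i]] conjunct2[OF idx[of j]] by argo
      then show False using that by simp
    qed
    then have "map (\<lambda>i. - g i) ys ! idx i \<le> map (\<lambda>i. - g i) ys ! idx j"
      using sk idx[of j] lys by (intro sorted_nth_mono) auto
    moreover have "idx i < length ys" "idx j < length ys" using idx[of i] idx[of j] lys by auto
    ultimately show ?thesis by (simp add: \<sigma>_def)
  qed
  ultimately show ?thesis by blast
qed



lemma udu_entry: "(P ** diagm l ** ctrans P) $ a $ b = (\<Sum>j\<in>UNIV. P $ a $ j * of_real (l $ j) * cnj (P $ b $ j))"
proof -
  have "(P ** diagm l ** ctrans P) $ a $ b = (\<Sum>k\<in>UNIV. (\<Sum>j\<in>UNIV. P $ a $ j * (if j = k then of_real (l $ j) else 0)) * cnj (P $ b $ k))"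
    by (simp add: matrix_matrix_mult_def diagm_def ctrans_def)
  also have "\<dots> = (\<Sum>k\<in>UNIV. P $ a $ k * of_real (l $ k) * cnj (P $ b $ k))"
    by (simp add: if_distrib if_distribR cong: if_cong)
  finally show ?thesis .
qed

lemma sorted_decomp:
  fixes P :: "('n::{finite,linorder}) cmat"
  assumes u: "unitary P" and X: "X = P ** diagm l ** ctrans P"
  shows "\<exists>l' P'. nonincr l' \<and> unitary P' \<and> X = P' ** diagm l' ** ctrans P'"
proof -
  obtain \<sigma> :: "'n \<Rightarrow> 'n" where b: "bij \<sigma>" and m: "\<And>i j. i \<le> j \<Longrightarrow> l $ (\<sigma> j) \<le> l $ (\<sigma> i)"
    using exists_sorting_bij[of "\<lambda>i. l $ i"] by blast
  define l' where "l' = (\<chi> j. l $ (\<sigma> j))"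
  define P' where "P' = (\<chi> a j. P $ a $ (\<sigma> j))"
  have "nonincr l'" unfolding nonincr_def l'_def using m by simp
  moreover have "unitary P'"
  proof -
    have "(ctrans P' ** P') $ j $ k = (ctrans P ** P) $ (\<sigma> j) $ (\<sigma> k)" for j k
      by (simp add: matrix_matrix_mult_def ctrans_def P'_def)
    also have "(ctrans P ** P) $ (\<sigma> j) $ (\<sigma> k) = mat 1 $ j $ k" for j k
      using u bij_is_inj[OF b] unfolding unitary_def by (simp add: mat_def inj_eq)
    finally show ?thesis unfolding unitary_def by (simp add: vec_eq_iff)
  qed
  moreover have "X = P' ** diagm l' ** ctrans P'"
  proof -
    have "(P' ** diagm l' ** ctrans P') $ a $ c = (P ** diagm l ** ctrans P) $ a $ c" for a c
    proof -
      have "(P' ** diagm l' ** ctrans P') $ a $ c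
          = (\<Sum>j\<in>UNIV. (\<lambda>j. P $ a $ j * of_real (l $ j) * cnj (P $ c $ j)) (\<sigma> j))"
        unfolding udu_entry by (simp add: P'_def l'_def)
      also have "\<dots> = (\<Sum>j\<in>UNIV. P $ a $ j * of_real (l $ j) * cnj (P $ c $ j))"
        using sum.reindex_bij_betw[of \<sigma> UNIV UNIV] b by (simp add: bij_betw_def)
      finally show ?thesis unfolding udu_entry .
    qed
    then show ?thesis using X by (simp add: vec_eq_iff)
  qed
  ultimately show ?thesis by blast
qed

lemma eigvals_nonincr:
  fixes P :: "('n::{finite,linorder}) cmat"
  assumes u: "unitary P" and X: "X = P ** diagm (eigvals X) ** ctrans P"
  shows "nonincr (eigvals X)"
proof -
  have "\<exists>l. nonincr l \<and> (\<exists>P. unitary P \<and> X = P ** diagm l ** ctrans P)"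
    using sorted_decomp[OF u X] by blast
  from someI_ex[OF this] show ?thesis unfolding eigvals_def by blast
qed

lemma conj_diag:
  assumes u: "unitary P" and X: "X = P ** diagm l ** ctrans P"
  shows "ctrans P ** X ** P = diagm l"
proof -
  have "ctrans P ** X ** P = (ctrans P ** P) ** diagm l ** (ctrans P ** P)"
    by (simp add: X matrix_mul_assoc)
  then show ?thesis using u by (simp add: unitary_def)
qed

lemma qform_axis_diag: "qform (diagm l) (axis i 1) = of_real (l $ i)"
  by (simp add: qform_diagm axis_def if_distrib if_distribR cong: if_cong)

lemma psd_diag_nonneg:
  assumes u: "unitary P" and X: "X = P ** diagm l ** ctrans P" and p: "psd X"
  shows "l $ i \<ge> 0"
proof -
  have "qform X (P *v axis i 1) = qform (ctrans P ** X ** P) (axis i 1)"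
    by (simp add: qform_conj)
  also have "\<dots> = of_real (l $ i)" using conj_diag[OF u X] by (simp add: qform_axis_diag)
  finally show ?thesis using p unfolding psd_def by (metis Re_complex_of_real)
qed

lemma rank_diagm: "rank (diagm l) = card {i. l $ i \<noteq> 0}"
proof -
  have "diagm l = (\<chi> i j. if i = j then (\<chi> i. complex_of_real (l $ i)) $ i else 0)"
    by (simp add: diagm_def vec_eq_iff)
  then show ?thesis using rank_diag[of "\<chi> i. complex_of_real (l $ i)"] by simp
qed

lemma rank_decomp:
  assumes u: "unitary P" and X: "X = P ** diagm l ** ctrans P"
  shows "rank X = card {i. l $ i \<noteq> 0}"
proof -
  have "rank X \<le> rank (diagm l)"
  proof -
    have "rank X = rank (P ** (diagm l ** ctrans P))" by (simp add: X matrix_mul_assoc)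
    also have "\<dots> \<le> rank (diagm l ** ctrans P)" by (rule rank_mul_le_right_gen)
    also have "\<dots> \<le> rank (diagm l)" by (rule rank_mul_le_left_gen)
    finally show ?thesis .
  qed
  moreover have "rank (diagm l) \<le> rank X"
  proof -
    have "rank (diagm l) = rank (ctrans P ** (X ** P))" using conj_diag[OF u X] by (simp add: matrix_mul_assoc)
    also have "\<dots> \<le> rank (X ** P)" by (rule rank_mul_le_right_gen)
    also have "\<dots> \<le> rank X" by (rule rank_mul_le_left_gen)
    finally show ?thesis .
  qed
  ultimately show ?thesis using rank_diagm by simp
qed

lemma pos_less: "i < j \<Longrightarrow> pos i < pos (j::'n::{finite,linorder})"
proof -
  assume ij: "i < j"
  have "{k. k < i} \<subset> {k. k < j}" using ij by auto
  then show ?thesis unfolding pos_def by (intro psubset_card_mono) auto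
qed

lemma eig_structure:
  fixes l :: "(real, 'n::{finite,linorder}) vec"
  assumes ni: "nonincr l" and nn: "\<And>i. l $ i \<ge> 0" and c: "card {i. l $ i \<noteq> 0} = r"
  shows "pos i < r \<Longrightarrow> l $ i > 0" and "r \<le> pos i \<Longrightarrow> l $ i = 0"
proof -
  let ?S = "{i. l $ i \<noteq> 0}"
  have down: "j \<in> ?S" if "k \<in> ?S" "j \<le> k" for j k
  proof -
    have "l $ k \<le> l $ j" using ni that(2) unfolding nonincr_def by blast
    then show ?thesis using nn[of k] that(1) by auto
  qed
  have A: "pos i < r" if "i \<in> ?S" for i
  proof -
    have "insert i {k. k < i} \<subseteq> ?S" using down that by auto
    then have "card (insert i {k. k < i}) \<le> r" using c by (intro card_mono[of ?S, simplified c]) auto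
    then show ?thesis unfolding pos_def by simp
  qed
  have B: "r \<le> pos i" if "i \<notin> ?S" for i
  proof -
    have "?S \<subseteq> {k. k < i}" using down that by (auto simp: not_less[symmetric])
    then have "card ?S \<le> card {k. k < i}" by (intro card_mono) auto
    then show ?thesis using c unfolding pos_def by simp
  qed
  show "l $ i > 0" if "pos i < r"
  proof -
    have "i \<in> ?S" using B[of i] that by linarith
    then show ?thesis using nn[of i] by simp
  qed
  show "l $ i = 0" if "r \<le> pos i"
  proof -
    have "i \<notin> ?S" using A[of i] that by linarith
    then show ?thesis by simp
  qed
qed



definition proj2 :: "nat \<Rightarrow> (complex, 'n::{finite,linorder}) vec \<Rightarrow> (complex, 'n) vec" where
  "proj2 r v = (\<chi> i. if r \<le> pos i then v $ i else 0)"

lemma norm_sq_vec: "(norm (v :: (complex,'n::finite) vec))\<^sup>2 = (\<Sum>i\<in>UNIV. (cmod (v $ i))\<^sup>2)"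
  unfolding norm_vec_def L2_set_def by (simp add: sum_nonneg)

lemma qform_id: "qform (mat 1) w = of_real ((norm w)\<^sup>2)"
proof -
  have "qform (mat 1) w = (\<Sum>i\<in>UNIV. cnj (w $ i) * w $ i)"
    unfolding qform_def mat_def by (simp add: if_distrib if_distribR cong: if_cong)
  also have "\<dots> = of_real (\<Sum>i\<in>UNIV. (cmod (w $ i))\<^sup>2)"
    by (simp add: complex_norm_square mult.commute del: of_real_power)
  finally show ?thesis by (simp add: norm_sq_vec)
qed

lemma unitary_norm: "unitary P \<Longrightarrow> norm (P *v w) = norm w"
proof -
  assume u: "unitary P"
  have "of_real ((norm (P *v w))\<^sup>2) = qform (mat 1) (P *v w)" by (rule qform_id[symmetric])
  also have "\<dots> = qform (ctrans P ** mat 1 ** P) w" by (rule qform_conj[symmetric])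
  also have "\<dots> = of_real ((norm w)\<^sup>2)" using u by (simp add: unitary_def qform_id)
  finally have "(norm (P *v w))\<^sup>2 = (norm w)\<^sup>2" using of_real_eq_iff by blast
  then show ?thesis by (simp add: power2_eq_iff_nonneg)
qed

lemma herm_lower: "herm D \<Longrightarrow> herm (lower_block r P D)"
proof -
  assume h: "herm D"
  have e: "ctrans (ctrans P ** D ** P) = ctrans P ** D ** P"
    using h by (simp add: ctrans_mult herm_def matrix_mul_assoc)
  have "cnj ((ctrans P ** D ** P) $ j $ i) = (ctrans P ** D ** P) $ i $ j" for i j
    using arg_cong[OF e, of "\<lambda>M. M $ i $ j"] by (simp add: ctrans_def)
  then show ?thesis unfolding herm_def lower_block_def ctrans_def by (simp add: vec_eq_iff)
qed

lemma qform_lower: "qform (lower_block r P D) v = qform D (P *v proj2 r v)"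
proof -
  have "qform (lower_block r P D) v = qform (ctrans P ** D ** P) (proj2 r v)"
    unfolding qform_def lower_block_def proj2_def by (intro sum.cong refl) auto
  then show ?thesis by (simp add: qform_conj)
qed

lemma psd_lower_D: "psd (lower_block r P D) \<Longrightarrow> Re (qform D (P *v proj2 r v)) \<ge> 0"
  unfolding psd_def by (metis qform_lower)

lemma psd_lower_I: "herm D \<Longrightarrow> (\<And>v. Re (qform D (P *v proj2 r v)) \<ge> 0) \<Longrightarrow> psd (lower_block r P D)"
  unfolding psd_def using herm_lower qform_lower by metis

lemma qform_zero_block:
  assumes u: "unitary P" and X: "X = P ** diagm l ** ctrans P" and z: "\<And>i. r \<le> pos i \<Longrightarrow> l $ i = 0"
  shows "qform X (P *v proj2 r v) = 0"
proof -
  have "qform X (P *v proj2 r v) = qform (ctrans P ** X ** P) (proj2 r v)" by (simp add: qform_conj)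
  also have "\<dots> = qform (diagm l) (proj2 r v)" using conj_diag[OF u X] by simp
  also have "\<dots> = 0" unfolding qform_diagm proj2_def using z by (simp add: sum.neutral)
  finally show ?thesis .
qed

lemma M2:
  assumes u: "unitary P" and X: "X = P ** diagm l ** ctrans P" and z: "\<And>i. r \<le> pos i \<Longrightarrow> l $ i = 0"
    and h: "herm D" and t: "t > 0" and p: "psd (X + t *\<^sub>R D)"
  shows "psd (lower_block r P D)"
proof (rule psd_lower_I[OF h])
  fix v
  have "0 \<le> Re (qform (X + t *\<^sub>R D) (P *v proj2 r v))" using p unfolding psd_def by blast
  also have "\<dots> = t * Re (qform D (P *v proj2 r v))"
    by (simp add: qform_add qform_scaleR qform_zero_block[OF u X z])
  finally show "Re (qform D (P *v proj2 r v)) \<ge> 0" using t by (simp add: zero_le_mult_iff)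
qed

lemma qform_scaleR_vec: "qform X (c *\<^sub>R u) = of_real (c\<^sup>2) * qform X u"
  unfolding qform_def by (simp add: scaleR_conv_of_real[where 'a=complex] sum_distrib_left power2_eq_square mult_ac)

lemma pd_uniform:
  fixes X :: "('n::finite) cmat"
  assumes pd: "pd X"
  shows "\<exists>\<mu>>0. \<forall>u. Re (qform X u) \<ge> \<mu> * (norm u)\<^sup>2"
proof -
  let ?f = "\<lambda>u. Re (qform X u)"
  have cont: "continuous_on (sphere 0 1) ?f"
    unfolding qform_def by (intro continuous_intros)
  obtain i0 :: 'n where True by blast
  have ne: "sphere (0::(complex,'n) vec) 1 \<noteq> {}"
  proof -
    have "axis i0 (1::complex) \<in> sphere 0 1" by (simp add: norm_axis_1)
    then show ?thesis by blast
  qed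
  obtain u0 where u0: "u0 \<in> sphere 0 1" and min: "\<And>u. u \<in> sphere 0 1 \<Longrightarrow> ?f u0 \<le> ?f u"
    using continuous_attains_inf[OF compact_sphere ne cont] by blast
  have "u0 \<noteq> 0" using u0 by auto
  then have pos: "?f u0 > 0" using pd unfolding pd_def by blast
  have "?f u \<ge> ?f u0 * (norm u)\<^sup>2" for u
  proof (cases "u = 0")
    case True then show ?thesis by (simp add: qform_def)
  next
    case False
    let ?w = "(1 / norm u) *\<^sub>R u"
    have w: "?w \<in> sphere 0 1" using False by simp
    have "u = norm u *\<^sub>R ?w" using False by simp
    have "qform X (norm u *\<^sub>R ?w) = of_real ((norm u)\<^sup>2) * qform X ?w" by (rule qform_scaleR_vec)
    then have "?f u = (norm u)\<^sup>2 * ?f ?w" using \<open>u = norm u *\<^sub>R ?w\<close> by simp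
    also have "\<dots> \<ge> (norm u)\<^sup>2 * ?f u0" using min[OF w] by (simp add: mult_left_mono)
    finally show ?thesis by (simp add: mult.commute)
  qed
  then show ?thesis using pos by blast
qed



definition bf :: "('n::finite) cmat \<Rightarrow> (complex,'n) vec \<Rightarrow> (complex,'n) vec \<Rightarrow> complex" where
  "bf A x y = (\<Sum>i\<in>UNIV. \<Sum>j\<in>UNIV. cnj (x $ i) * A $ i $ j * y $ j)"

lemma qform_split: "qform A (x + y) = qform A x + bf A x y + bf A y x + qform A y"
  unfolding qform_def bf_def by (simp add: algebra_simps sum.distrib)

lemma bf_bound: "cmod (bf A x y) \<le> (\<Sum>i\<in>UNIV. \<Sum>j\<in>UNIV. cmod (A $ i $ j)) * norm x * norm y"
proof -
  have "cmod (bf A x y) \<le> (\<Sum>i\<in>UNIV. cmod (\<Sum>j\<in>UNIV. cnj (x $ i) * A $ i $ j * y $ j))"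
    unfolding bf_def by (rule norm_sum)
  also have "\<dots> \<le> (\<Sum>i\<in>UNIV. \<Sum>j\<in>UNIV. cmod (cnj (x $ i) * A $ i $ j * y $ j))"
    by (intro sum_mono norm_sum)
  also have "\<dots> \<le> (\<Sum>i\<in>UNIV. \<Sum>j\<in>UNIV. norm x * cmod (A $ i $ j) * norm y)"
  proof (intro sum_mono)
    fix i j
    have "cmod (cnj (x $ i) * A $ i $ j * y $ j) = cmod (x $ i) * cmod (A $ i $ j) * cmod (y $ j)"
      by (simp add: norm_mult)
    also have "\<dots> \<le> norm x * cmod (A $ i $ j) * norm y"
      by (intro mult_mono Finite_Cartesian_Product.norm_nth_le) auto
    finally show "cmod (cnj (x $ i) * A $ i $ j * y $ j) \<le> norm x * cmod (A $ i $ j) * norm y" .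
  qed
  also have "\<dots> = (\<Sum>i\<in>UNIV. \<Sum>j\<in>UNIV. cmod (A $ i $ j)) * norm x * norm y"
    by (simp add: sum_distrib_left sum_distrib_right mult_ac)
  finally show ?thesis .
qed

lemma quad_nonneg:
  fixes al t ka C C' a b :: real
  assumes "al > 0" "t \<ge> 0" "ka > 0" "C \<le> C'" "t * C' \<le> al / 2" "t * C'\<^sup>2 \<le> ka * al / 2" "a \<ge> 0" "b \<ge> 0"
  shows "al * a\<^sup>2 - t * C * a\<^sup>2 - 2 * t * C * a * b + t * ka * b\<^sup>2 \<ge> 0"
proof -
  define s where "s = t * C'"
  have s2: "s\<^sup>2 \<le> al * t * ka / 2"
  proof -
    have "s\<^sup>2 = t * (t * C'\<^sup>2)" by (simp add: s_def power2_eq_square)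
    also have "\<dots> \<le> t * (ka * al / 2)" using assms by (intro mult_left_mono) auto
    finally show ?thesis by (simp add: mult_ac)
  qed
  have e1: "(al/2) * ((al/2)*a\<^sup>2 - 2 * s * a * b + t*ka*b\<^sup>2) = (al*a/2 - s * b)\<^sup>2 + (al*t*ka/2 - s\<^sup>2)*b\<^sup>2"
    by (simp add: algebra_simps power2_eq_square)
  have "0 \<le> (al*a/2 - s * b)\<^sup>2 + (al*t*ka/2 - s\<^sup>2)*b\<^sup>2" using s2 by (intro add_nonneg_nonneg) auto
  then have "0 \<le> (al/2) * ((al/2)*a\<^sup>2 - 2 * s * a * b + t*ka*b\<^sup>2)" using e1 by simp
  then have q: "0 \<le> (al/2)*a\<^sup>2 - 2 * s * a * b + t*ka*b\<^sup>2" using \<open>al > 0\<close>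
    by (simp add: zero_le_mult_iff)
  have tc: "t * C \<le> s" unfolding s_def using assms by (intro mult_left_mono) auto
  have "t * C * a\<^sup>2 \<le> s * a\<^sup>2" using tc by (intro mult_right_mono) auto
  moreover have "2 * t * C * a * b \<le> 2 * s * a * b"
  proof -
    have "(t * C) * (2 * a * b) \<le> s * (2 * a * b)" using tc assms by (intro mult_right_mono) auto
    then show ?thesis by (simp add: mult_ac)
  qed
  moreover have "s * a\<^sup>2 \<le> (al/2) * a\<^sup>2" unfolding s_def using assms by (intro mult_right_mono) auto
  ultimately show ?thesis using q by linarith
qed

lemma M3:
  fixes P :: "('n::{finite,linorder}) cmat"
  assumes u: "unitary P" and X: "X = P ** diagm l ** ctrans P"
    and lm: "lm > 0" and lpos: "\<And>i. pos i < r \<Longrightarrow> l $ i \<ge> lm"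
    and z: "\<And>i. r \<le> pos i \<Longrightarrow> l $ i = 0"
    and h: "herm X" "herm H" and k: "\<kappa> > 0"
    and hyp: "\<And>v. Re (qform H (P *v proj2 r v)) \<ge> \<kappa> * (norm (proj2 r v))\<^sup>2"
  shows "\<exists>t0>0. \<forall>t. 0 \<le> t \<and> t \<le> t0 \<longrightarrow> psd (X + t *\<^sub>R H)"
proof -
  define A where "A = ctrans P ** H ** P"
  define C where "C = (\<Sum>i\<in>UNIV. \<Sum>j\<in>UNIV. cmod (A $ i $ j))"
  define C' where "C' = C + 1"
  have C0: "C \<ge> 0" unfolding C_def by (intro sum_nonneg) auto
  have C'0: "C' > 0" using C0 by (simp add: C'_def)
  define t0 where "t0 = min (lm / (2 * C')) (\<kappa> * lm / (2 * C'\<^sup>2))"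
  have t0: "t0 > 0" unfolding t0_def using lm k C'0 by simp
  have "psd (X + t *\<^sub>R H)" if t: "0 \<le> t" "t \<le> t0" for t
    unfolding psd_def
  proof (intro conjI allI)
    show "herm (X + t *\<^sub>R H)" using h by (simp add: herm_add herm_scaleR)
  next
    fix w
    define zz where "zz = ctrans P *v w"
    have wz: "w = P *v zz" unfolding zz_def using unitary_right[OF u]
      by (simp add: matrix_vector_mul_assoc)
    define y where "y = proj2 r zz"
    define x where "x = zz - y"
    have zxy: "zz = x + y" by (simp add: x_def)
    have q1: "qform (X + t *\<^sub>R H) w = qform (diagm l) zz + of_real t * qform A zz"
    proof -
      have "qform (X + t *\<^sub>R H) w = qform X (P *v zz) + of_real t * qform H (P *v zz)"
        unfolding wz by (simp add: qform_add qform_scaleR)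
      also have "qform X (P *v zz) = qform (ctrans P ** X ** P) zz" by (rule qform_conj[symmetric])
      also have "qform H (P *v zz) = qform A zz" unfolding A_def by (rule qform_conj[symmetric])
      finally show ?thesis using conj_diag[OF u X] by simp
    qed
    have d1: "Re (qform (diagm l) zz) \<ge> lm * (norm x)\<^sup>2"
    proof -
      have "lm * (norm x)\<^sup>2 = (\<Sum>i\<in>UNIV. lm * (cmod (x $ i))\<^sup>2)" by (simp add: norm_sq_vec sum_distrib_left)
      also have "\<dots> \<le> (\<Sum>i\<in>UNIV. l $ i * (cmod (zz $ i))\<^sup>2)"
      proof (intro sum_mono)
        fix i
        show "lm * (cmod (x $ i))\<^sup>2 \<le> l $ i * (cmod (zz $ i))\<^sup>2"
        proof (cases "r \<le> pos i")
          case True then show ?thesis by (simp add: x_def y_def proj2_def z)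
        next
          case False then show ?thesis using lpos[of i] by (simp add: x_def y_def proj2_def mult_right_mono)
        qed
      qed
      finally show ?thesis by (simp add: qform_diagm)
    qed
    have a1: "Re (qform A y) \<ge> \<kappa> * (norm y)\<^sup>2"
      using hyp[of zz] unfolding A_def y_def by (simp add: qform_conj)
    have a2: "Re (qform A x) \<ge> - (C * (norm x)\<^sup>2)"
    proof -
      have "cmod (qform A x) \<le> C * norm x * norm x" using bf_bound[of A x x] unfolding C_def bf_def qform_def .
      then show ?thesis using abs_Re_le_cmod[of "qform A x"] by (simp add: power2_eq_square)
    qed
    have a3: "Re (bf A x y + bf A y x) \<ge> - (2 * C * norm x * norm y)"
    proof -
      have "cmod (bf A x y) \<le> C * norm x * norm y" "cmod (bf A y x) \<le> C * norm y * norm x"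
        using bf_bound unfolding C_def by auto
      then show ?thesis using abs_Re_le_cmod[of "bf A x y"] abs_Re_le_cmod[of "bf A y x"] by (simp add: mult_ac)
    qed
    have "Re (qform A zz) \<ge> \<kappa> * (norm y)\<^sup>2 - C * (norm x)\<^sup>2 - 2 * C * norm x * norm y"
      using a1 a2 a3 unfolding zxy qform_split by simp
    then have "t * Re (qform A zz) \<ge> t * (\<kappa> * (norm y)\<^sup>2 - C * (norm x)\<^sup>2 - 2 * C * norm x * norm y)"
      using t by (intro mult_left_mono) auto
    moreover have "lm * (norm x)\<^sup>2 - t * C * (norm x)\<^sup>2 - 2 * t * C * norm x * norm y + t * \<kappa> * (norm y)\<^sup>2 \<ge> 0"
    proof (rule quad_nonneg[OF lm t(1) k, of C C'])
      show "C \<le> C'" by (simp add: C'_def)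
      show "t * C' \<le> lm / 2" using t C'0 unfolding t0_def by (simp add: field_simps)
      show "t * C'\<^sup>2 \<le> \<kappa> * lm / 2" using t C'0 unfolding t0_def by (simp add: field_simps)
    qed auto
    ultimately show "Re (qform (X + t *\<^sub>R H) w) \<ge> 0" using d1 unfolding q1
      by (simp add: algebra_simps)
  qed
  then show ?thesis using t0 by blast
qed



lemma coords:
  fixes \<Theta> :: "nat \<Rightarrow> ('n::finite) cmat"
  assumes orth: "\<forall>k\<in>{1..d}. \<forall>l\<in>{1..d}. minner (\<Theta> k) (\<Theta> l) = (if k = l then 1 else 0)"
    and span: "\<forall>X\<in>Sn b. \<exists>c. X = (\<Sum>k=1..d. c k *\<^sub>R \<Theta> k)"
    and D: "D \<in> Sn b"
  shows "D = (\<Sum>k=1..d. (\<Theta> k \<bullet> D) *\<^sub>R \<Theta> k)"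
proof -
  obtain c where c: "D = (\<Sum>k=1..d. c k *\<^sub>R \<Theta> k)" using span D by blast
  have "\<Theta> j \<bullet> D = c j" if j: "j \<in> {1..d}" for j
  proof -
    have "\<Theta> j \<bullet> D = (\<Sum>k=1..d. c k * (\<Theta> j \<bullet> \<Theta> k))" unfolding c by (simp add: inner_sum_right)
    also have "\<dots> = (\<Sum>k=1..d. if k = j then c k else 0)"
      using orth j by (intro sum.cong refl) (auto simp: minner_inner)
    also have "\<dots> = c j" using j by simp
    finally show ?thesis .
  qed
  then show ?thesis using c by (metis (no_types, lifting) sum.cong)
qed

lemma norm_coords:
  fixes \<Theta> :: "nat \<Rightarrow> ('n::finite) cmat"
  assumes orth: "\<forall>k\<in>{1..d}. \<forall>l\<in>{1..d}. minner (\<Theta> k) (\<Theta> l) = (if k = l then 1 else 0)"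
    and span: "\<forall>X\<in>Sn b. \<exists>c. X = (\<Sum>k=1..d. c k *\<^sub>R \<Theta> k)"
    and D: "D \<in> Sn b"
  shows "(norm D)\<^sup>2 = (\<Sum>k=1..d. (\<Theta> k \<bullet> D)\<^sup>2)"
proof -
  have "(norm D)\<^sup>2 = D \<bullet> D" by (simp add: power2_norm_eq_inner)
  also have "\<dots> = (\<Sum>k=1..d. (\<Theta> k \<bullet> D) *\<^sub>R \<Theta> k) \<bullet> D" using coords[OF orth span D] by simp
  also have "\<dots> = (\<Sum>k=1..d. (\<Theta> k \<bullet> D)\<^sup>2)" by (simp add: inner_sum_left power2_eq_square)
  finally show ?thesis .
qed

lemma norm_coords_beta:
  fixes \<Theta> :: "nat \<Rightarrow> ('n::finite) cmat"
  assumes orth: "\<forall>k\<in>{1..d}. \<forall>l\<in>{1..d}. minner (\<Theta> k) (\<Theta> l) = (if k = l then 1 else 0)"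
    and span: "\<forall>X\<in>Sn b. \<exists>c. X = (\<Sum>k=1..d. c k *\<^sub>R \<Theta> k)"
    and D: "D \<in> Sn b" and al: "\<forall>k\<in>\<alpha>. \<Theta> k \<bullet> D = 0" and asub: "\<alpha> \<subseteq> {1..d}"
  shows "(norm D)\<^sup>2 = (\<Sum>k\<in>{1..d} - \<alpha>. (\<Theta> k \<bullet> D)\<^sup>2)"
proof -
  have "(norm D)\<^sup>2 = (\<Sum>k=1..d. (\<Theta> k \<bullet> D)\<^sup>2)" by (rule norm_coords[OF orth span D])
  also have "\<dots> = (\<Sum>k\<in>{1..d} - \<alpha>. (\<Theta> k \<bullet> D)\<^sup>2)"
    by (rule sum.mono_neutral_right) (use al in auto)
  finally show ?thesis .
qed

lemma coord_le_norm:
  fixes \<Theta> :: "nat \<Rightarrow> ('n::finite) cmat"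
  assumes orth: "\<forall>k\<in>{1..d}. \<forall>l\<in>{1..d}. minner (\<Theta> k) (\<Theta> l) = (if k = l then 1 else 0)"
    and k: "k \<in> {1..d}"
  shows "\<bar>\<Theta> k \<bullet> D\<bar> \<le> norm D"
proof -
  have "\<Theta> k \<bullet> \<Theta> k = 1" using orth k by (simp add: minner_inner)
  then have "norm (\<Theta> k) = 1" by (simp add: norm_eq_sqrt_inner)
  then show ?thesis using Cauchy_Schwarz_ineq2[of "\<Theta> k" D] by simp
qed

lemma Qbeta_inner: "minner (Qbeta \<Theta> \<beta> p D) D = (\<Sum>k\<in>\<beta>. p k * (\<Theta> k \<bullet> D)\<^sup>2)"
  unfolding Qbeta_def minner_inner by (simp add: inner_sum_left power2_eq_square mult.assoc)

lemma limit_obj_eq: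
  "limit_obj \<Theta> \<beta> p f Xbar D = 1/2 * (\<Sum>k\<in>\<beta>. p k * (\<Theta> k \<bullet> D)\<^sup>2) + (mat 1 - spectral_op f Xbar) \<bullet> D"
  unfolding limit_obj_def Qbeta_inner by (simp add: minner_inner)

lemma pmin_exists:
  assumes "finite \<beta>" "\<forall>k\<in>\<beta>. p k > (0::real)" "(\<Sum>k\<in>\<beta>. p k) = 1"
  shows "\<exists>pm>0. \<forall>k\<in>\<beta>. pm \<le> p k"
proof -
  have ne: "\<beta> \<noteq> {}" using assms(3) by auto
  let ?pm = "Min (p ` \<beta>)"
  have "?pm \<in> p ` \<beta>" using assms(1) ne by (intro Min_in) auto
  then have "?pm > 0" using assms(2) by auto
  moreover have "\<forall>k\<in>\<beta>. ?pm \<le> p k" using assms(1) by auto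
  ultimately show ?thesis by blast
qed

lemma weighted_ge:
  assumes "finite \<beta>" "\<forall>k\<in>\<beta>. pm \<le> p k" "pm \<ge> 0"
  shows "(\<Sum>k\<in>\<beta>. p k * (c k)\<^sup>2) \<ge> pm * (\<Sum>k\<in>\<beta>. (c k :: real)\<^sup>2)"
  unfolding sum_distrib_left using assms by (intro sum_mono mult_right_mono) auto



definition qf :: "(nat \<Rightarrow> 'v::real_inner) \<Rightarrow> nat set \<Rightarrow> (nat \<Rightarrow> real) \<Rightarrow> 'v \<Rightarrow> real" where
  "qf \<Theta> \<beta> p D = (\<Sum>k\<in>\<beta>. p k * (\<Theta> k \<bullet> D)\<^sup>2)"

definition phi :: "(nat \<Rightarrow> 'v::real_inner) \<Rightarrow> nat set \<Rightarrow> (nat \<Rightarrow> real) \<Rightarrow> 'v \<Rightarrow> 'v \<Rightarrow> real" where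
  "phi \<Theta> \<beta> p G D = 1/2 * qf \<Theta> \<beta> p D + G \<bullet> D"

lemma phi_expand:
  "phi \<Theta> \<beta> p G (A + t *\<^sub>R E) = phi \<Theta> \<beta> p G A
     + t * ((\<Sum>k\<in>\<beta>. p k * (\<Theta> k \<bullet> A) * (\<Theta> k \<bullet> E)) + G \<bullet> E) + t\<^sup>2 / 2 * qf \<Theta> \<beta> p E"
  unfolding phi_def qf_def
  by (simp add: inner_add_right power2_eq_square algebra_simps sum.distrib sum_distrib_left sum_divide_distrib)

lemma continuous_phi: "continuous_on S (phi \<Theta> \<beta> p G)"
  unfolding phi_def qf_def by (intro continuous_intros)

lemma tpos_lin:
  fixes a b :: real
  assumes "\<And>t. 0 < t \<Longrightarrow> t \<le> 1 \<Longrightarrow> t * a + t\<^sup>2 / 2 * b \<ge> 0" and "b \<ge> 0"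
  shows "a \<ge> 0"
proof (rule ccontr)
  assume "\<not> a \<ge> 0"
  then have a: "a < 0" by simp
  define t where "t = min 1 (- a / (b + 1))"
  have "- a / (b + 1) > 0" using a assms(2) by (intro divide_pos_pos) auto
  then have t0: "0 < t" "t \<le> 1" by (auto simp: t_def)
  have tb: "t * b \<le> - a" 
  proof -
    have "t \<le> - a / (b + 1)" by (simp add: t_def)
    then have "t * (b + 1) \<le> (- a / (b + 1)) * (b + 1)" using assms(2) by (intro mult_right_mono) auto
    also have "\<dots> = - a" using assms(2) by simp
    finally have "t * (b + 1) \<le> - a" .
    then show ?thesis using t0 by (simp add: algebra_simps)
  qed
  have "t * a + t\<^sup>2 / 2 * b = t * (a + t * b / 2)" by (simp add: power2_eq_square algebra_simps)
  also have "\<dots> < 0" using t0 tb a by (intro mult_pos_neg) auto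
  finally show False using assms(1)[OF t0] by simp
qed

lemma var_ineq:
  assumes cvx: "convex K" and Dh: "Dh \<in> K" and opt: "\<forall>D\<in>K. phi \<Theta> \<beta> p G Dh \<le> phi \<Theta> \<beta> p G D"
    and D: "D \<in> K" and pnn: "\<forall>k\<in>\<beta>. p k \<ge> 0"
  shows "phi \<Theta> \<beta> p G D \<ge> phi \<Theta> \<beta> p G Dh + 1/2 * qf \<Theta> \<beta> p (D - Dh)"
proof -
  let ?E = "D - Dh"
  let ?a = "(\<Sum>k\<in>\<beta>. p k * (\<Theta> k \<bullet> Dh) * (\<Theta> k \<bullet> ?E)) + G \<bullet> ?E"
  have qnn: "qf \<Theta> \<beta> p ?E \<ge> 0" unfolding qf_def using pnn by (intro sum_nonneg) auto
  have "t * ?a + t\<^sup>2 / 2 * qf \<Theta> \<beta> p ?E \<ge> 0" if t: "0 < t" "t \<le> 1" for t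
  proof -
    have "Dh + t *\<^sub>R ?E = (1 - t) *\<^sub>R Dh + t *\<^sub>R D" by (simp add: algebra_simps)
    also have "\<dots> \<in> K" using cvx Dh D t by (intro convexD) auto
    finally have "phi \<Theta> \<beta> p G Dh \<le> phi \<Theta> \<beta> p G (Dh + t *\<^sub>R ?E)" using opt by blast
    then show ?thesis unfolding phi_expand by simp
  qed
  then have "?a \<ge> 0" using qnn by (rule tpos_lin)
  moreover have "phi \<Theta> \<beta> p G D = phi \<Theta> \<beta> p G Dh + ?a + 1/2 * qf \<Theta> \<beta> p ?E"
    using phi_expand[of \<Theta> \<beta> p G Dh 1 ?E] by simp
  ultimately show ?thesis by simp
qed

lemma limit_exists:
  fixes K :: "'v::euclidean_space set"
  assumes cl: "closed K" and z: "0 \<in> K" and c: "c > 0"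
    and coer: "\<forall>D\<in>K. qf \<Theta> \<beta> p D \<ge> c * (norm D)\<^sup>2"
  shows "\<exists>Dh\<in>K. \<forall>D\<in>K. phi \<Theta> \<beta> p G Dh \<le> phi \<Theta> \<beta> p G D"
proof -
  define R where "R = 2 * norm G / c + 1"
  let ?K' = "K \<inter> cball 0 R"
  have cpt: "compact ?K'" using cl by (intro closed_Int_compact compact_cball)
  have ne: "?K' \<noteq> {}" using z unfolding R_def using c by (auto intro!: exI[of _ 0])
  obtain Dh where Dh: "Dh \<in> ?K'" and m: "\<And>D. D \<in> ?K' \<Longrightarrow> phi \<Theta> \<beta> p G Dh \<le> phi \<Theta> \<beta> p G D"
    using continuous_attains_inf[OF cpt ne continuous_phi] by blast
  have phi0: "phi \<Theta> \<beta> p G 0 = 0" unfolding phi_def qf_def by simp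
  have "phi \<Theta> \<beta> p G Dh \<le> phi \<Theta> \<beta> p G D" if D: "D \<in> K" for D
  proof (cases "D \<in> cball 0 R")
    case True then show ?thesis using m D by blast
  next
    case False
    then have nD: "norm D > R" by simp
    have "phi \<Theta> \<beta> p G D \<ge> c/2 * (norm D)\<^sup>2 - norm G * norm D"
    proof -
      have "G \<bullet> D \<ge> - (norm G * norm D)" using Cauchy_Schwarz_ineq2[of G D] by linarith
      moreover have "qf \<Theta> \<beta> p D \<ge> c * (norm D)\<^sup>2" using coer D by blast
      ultimately show ?thesis unfolding phi_def by simp
    qed
    moreover have "c/2 * (norm D)\<^sup>2 - norm G * norm D > 0"
    proof -
      have "c / 2 * norm D > norm G"
      proof -
        have "norm D > 2 * norm G / c" using nD R_def by simp
        then have "c * norm D > 2 * norm G" using c by (simp add: divide_less_eq mult.commute)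
        then show ?thesis by simp
      qed
      moreover have "norm D > 0" using nD R_def c by (smt (verit) divide_nonneg_nonneg norm_ge_zero)
      ultimately have "norm D * (c / 2 * norm D - norm G) > 0" by simp
      then show ?thesis by (simp add: power2_eq_square algebra_simps)
    qed
    moreover have "phi \<Theta> \<beta> p G Dh \<le> 0" using m[of 0] z c phi0 unfolding R_def by simp
    ultimately show ?thesis by linarith
  qed
  then show ?thesis using Dh by blast
qed



lemma det_core:
  fixes Dm Dh D' :: "'v::real_normed_vector" and phi psi :: "'v \<Rightarrow> real"
  assumes c: "c > 0" and e: "e > 0"
    and strong: "phi Dm \<ge> phi Dh + c * (norm (Dm - Dh))\<^sup>2"
    and opt: "psi Dm \<le> psi D'"
    and dev1: "\<bar>psi Dm - phi Dm\<bar> \<le> a * (norm Dm)\<^sup>2 + b * norm Dm"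
    and dev2: "\<bar>psi D' - phi D'\<bar> \<le> a * (norm D')\<^sup>2 + b * norm D'"
    and a: "a \<ge> 0" "a \<le> c / 4" and b: "b \<ge> 0" "b \<le> c * e / 4"
    and T: "phi D' - phi Dh + a * (norm D')\<^sup>2 + b * norm D' + 2 * a * (norm Dh)\<^sup>2 + b * norm Dh \<le> c * e\<^sup>2 / 8"
  shows "norm (Dm - Dh) \<le> e"
proof (rule ccontr)
  assume "\<not> norm (Dm - Dh) \<le> e"
  then have ue: "norm (Dm - Dh) > e" by simp
  define u where "u = norm (Dm - Dh)"
  define R where "R = norm Dh"
  have u0: "u \<ge> 0" "R \<ge> 0" by (auto simp: u_def R_def)
  have nDm: "norm Dm \<le> R + u" unfolding u_def R_def by (metis norm_triangle_sub)
  have nDm2: "(norm Dm)\<^sup>2 \<le> 2 * R\<^sup>2 + 2 * u\<^sup>2"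
  proof -
    have "(norm Dm)\<^sup>2 \<le> (R + u)\<^sup>2" using nDm by (intro power_mono) auto
    also have "\<dots> \<le> 2 * R\<^sup>2 + 2 * u\<^sup>2"
    proof -
      have "(R + u)\<^sup>2 + (R - u)\<^sup>2 = 2 * R\<^sup>2 + 2 * u\<^sup>2" by (simp add: power2_eq_square algebra_simps)
      moreover have "(R - u)\<^sup>2 \<ge> 0" by simp
      ultimately show ?thesis by linarith
    qed
    finally show ?thesis .
  qed
  have "c * u\<^sup>2 \<le> phi D' - phi Dh + a * (norm D')\<^sup>2 + b * norm D' + a * (norm Dm)\<^sup>2 + b * norm Dm"
    using strong opt dev1 dev2 unfolding u_def by linarith
  also have "a * (norm Dm)\<^sup>2 \<le> a * (2 * R\<^sup>2 + 2 * u\<^sup>2)" using nDm2 a by (intro mult_left_mono) auto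
  also have "b * norm Dm \<le> b * (R + u)" using nDm b by (intro mult_left_mono) auto
  finally have "c * u\<^sup>2 \<le> (phi D' - phi Dh + a * (norm D')\<^sup>2 + b * norm D' + 2 * a * R\<^sup>2 + b * R) + 2 * a * u\<^sup>2 + b * u"
    by (simp add: algebra_simps)
  also have "\<dots> \<le> c * e\<^sup>2 / 8 + 2 * a * u\<^sup>2 + b * u" using T unfolding R_def by simp
  finally have i1: "c * u\<^sup>2 \<le> c * e\<^sup>2 / 8 + 2 * a * u\<^sup>2 + b * u" .
  have "2 * a * u\<^sup>2 \<le> c / 2 * u\<^sup>2" using a by (intro mult_right_mono) auto
  moreover have "b * u \<le> c * e / 4 * u" using b u0 by (intro mult_right_mono) auto
  ultimately have i2: "c / 2 * u\<^sup>2 \<le> c * e\<^sup>2 / 8 + c * e / 4 * u" using i1 by linarith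
  have ue': "u > e" using ue unfolding u_def .
  have "u * (2 * u - e) > e * e"
  proof -
    have "u * (2 * u - e) > e * (2 * u - e)" using ue' e by (intro mult_strict_right_mono) auto
    moreover have "e * (2 * u - e) \<ge> e * e" using ue' e by (intro mult_left_mono) auto
    ultimately show ?thesis by linarith
  qed
  then have "c / 4 * (u * (2 * u - e)) > c / 4 * (e * e)" using c by (intro mult_strict_left_mono) auto
  then have "c / 2 * u\<^sup>2 - c * e / 4 * u > c * e\<^sup>2 / 4" by (simp add: power2_eq_square algebra_simps)
  moreover have "c * e\<^sup>2 / 4 > c * e\<^sup>2 / 8" using c e by simp
  ultimately show False using i2 by linarith
qed



definition psi :: "(nat \<Rightarrow> ('n::{finite,linorder}) cmat) \<Rightarrow> nat \<Rightarrow> (nat \<Rightarrow> nat) \<Rightarrow> (nat \<Rightarrow> real) \<Rightarrow> real \<Rightarrow> real \<Rightarrow> real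
   \<Rightarrow> 'n cmat \<Rightarrow> 'n cmat \<Rightarrow> 'n cmat \<Rightarrow> 'n cmat \<Rightarrow> real" where
  "psi \<Theta> m om xi \<nu> \<rho> \<gamma> Gt Xb Xt D =
     1 / (2 * real m) * (\<Sum>i<m. (\<Theta> (om i) \<bullet> D)\<^sup>2) - \<nu> / (real m * \<rho>) * (\<Sum>i<m. xi i * (\<Theta> (om i) \<bullet> D))
     + Gt \<bullet> D + \<gamma> * ((Xb - Xt) \<bullet> D) + \<rho> * \<gamma> / 2 * (norm D)\<^sup>2"

lemma est_psi:
  assumes r: "\<rho> \<noteq> 0"
  shows "est_obj \<Theta> f m (\<lambda>i. minner (\<Theta> (om i)) Xb + \<nu> * xi i) om \<rho> \<gamma> Xt (Xb + \<rho> *\<^sub>R D)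
       = est_obj \<Theta> f m (\<lambda>i. minner (\<Theta> (om i)) Xb + \<nu> * xi i) om \<rho> \<gamma> Xt Xb
         + \<rho>\<^sup>2 * psi \<Theta> m om xi \<nu> \<rho> \<gamma> (mat 1 - spectral_op f Xt) Xb Xt D"
proof -
  let ?G = "mat 1 - spectral_op f Xt"
  have s1: "(\<Sum>i<m. (\<Theta> (om i) \<bullet> Xb + \<nu> * xi i - \<Theta> (om i) \<bullet> (Xb + \<rho> *\<^sub>R D))\<^sup>2)
      = (\<Sum>i<m. (\<nu> * xi i)\<^sup>2) - 2 * \<rho> * \<nu> * (\<Sum>i<m. xi i * (\<Theta> (om i) \<bullet> D)) + \<rho>\<^sup>2 * (\<Sum>i<m. (\<Theta> (om i) \<bullet> D)\<^sup>2)"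
  proof -
    have "(\<Theta> (om i) \<bullet> Xb + \<nu> * xi i - \<Theta> (om i) \<bullet> (Xb + \<rho> *\<^sub>R D))\<^sup>2
       = (\<nu> * xi i)\<^sup>2 - 2 * \<rho> * \<nu> * (xi i * (\<Theta> (om i) \<bullet> D)) + \<rho>\<^sup>2 * (\<Theta> (om i) \<bullet> D)\<^sup>2" for i
      by (simp add: inner_add_right power2_eq_square algebra_simps)
    then show ?thesis by (simp add: sum.distrib sum_subtractf sum_distrib_left)
  qed
  have s2: "(\<Sum>i<m. (\<Theta> (om i) \<bullet> Xb + \<nu> * xi i - \<Theta> (om i) \<bullet> Xb)\<^sup>2) = (\<Sum>i<m. (\<nu> * xi i)\<^sup>2)"
    by simp
  have n1: "(norm (Xb + \<rho> *\<^sub>R D - Xt))\<^sup>2 = (norm (Xb - Xt))\<^sup>2 + 2 * \<rho> * ((Xb - Xt) \<bullet> D) + \<rho>\<^sup>2 * (norm D)\<^sup>2"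
  proof -
    have "Xb + \<rho> *\<^sub>R D - Xt = (Xb - Xt) + \<rho> *\<^sub>R D" by simp
    then show ?thesis by (simp only: power2_norm_eq_inner) (simp add: inner_add_left inner_add_right power2_eq_square algebra_simps inner_commute)
  qed
  have lin: "?G \<bullet> (Xb + \<rho> *\<^sub>R D) = ?G \<bullet> Xb + \<rho> * (?G \<bullet> D)" by (simp add: inner_add_right)
  show ?thesis
  proof (cases "m = 0")
    case True
    then show ?thesis unfolding est_obj_def minner_inner psi_def n1 lin
      by (simp add: algebra_simps power2_eq_square)
  next
    case False
    then have "real m \<noteq> 0" by simp
    then show ?thesis
      unfolding est_obj_def minner_inner psi_def s1 n1 lin
      using r by (simp add: field_simps power2_eq_square)
  qed
qed

lemma regroup:
  assumes om: "\<forall>i<m. om i \<in> \<beta>" and fin: "finite \<beta>"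
  shows "(\<Sum>i<m. x i * g (om i)) = (\<Sum>k\<in>\<beta>. g k * (\<Sum>i<m. if om i = k then x i else 0 :: real))"
proof -
  have "(\<Sum>i<m. x i * g (om i)) = (\<Sum>i<m. \<Sum>k\<in>\<beta>. if om i = k then x i * g k else 0)"
    using om fin by (intro sum.cong refl) (simp add: sum.delta')
  also have "\<dots> = (\<Sum>k\<in>\<beta>. \<Sum>i<m. if om i = k then x i * g k else 0)" by (rule sum.swap)
  also have "\<dots> = (\<Sum>k\<in>\<beta>. g k * (\<Sum>i<m. if om i = k then x i else 0))"
    by (simp add: sum_distrib_left if_distrib mult.commute cong: if_cong)
  finally show ?thesis .
qed



definition cnt :: "(nat \<Rightarrow> nat) \<Rightarrow> nat \<Rightarrow> nat \<Rightarrow> real" where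
  "cnt om m k = (\<Sum>i<m. if om i = k then 1 else 0)"
definition nse :: "(nat \<Rightarrow> nat) \<Rightarrow> (nat \<Rightarrow> real) \<Rightarrow> nat \<Rightarrow> nat \<Rightarrow> real" where
  "nse om xi m k = (\<Sum>i<m. if om i = k then xi i else 0)"

lemma sum_abs_bound1:
  fixes c a :: "nat \<Rightarrow> real"
  assumes "\<forall>k\<in>\<beta>. \<bar>c k\<bar> \<le> N"
  shows "\<bar>\<Sum>k\<in>\<beta>. a k * (c k)\<^sup>2\<bar> \<le> (\<Sum>k\<in>\<beta>. \<bar>a k\<bar>) * N\<^sup>2"
proof -
  have "\<bar>\<Sum>k\<in>\<beta>. a k * (c k)\<^sup>2\<bar> \<le> (\<Sum>k\<in>\<beta>. \<bar>a k * (c k)\<^sup>2\<bar>)" by (rule sum_abs)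
  also have "\<dots> \<le> (\<Sum>k\<in>\<beta>. \<bar>a k\<bar> * N\<^sup>2)"
  proof (intro sum_mono)
    fix k assume k: "k \<in> \<beta>"
    have "(c k)\<^sup>2 \<le> N\<^sup>2" using assms k by (metis abs_le_square_iff abs_ge_zero order_trans abs_of_nonneg power2_abs)
    then show "\<bar>a k * (c k)\<^sup>2\<bar> \<le> \<bar>a k\<bar> * N\<^sup>2" by (simp add: abs_mult mult_left_mono)
  qed
  finally show ?thesis by (simp add: sum_distrib_right)
qed

lemma sum_abs_bound2:
  fixes c a :: "nat \<Rightarrow> real"
  assumes "\<forall>k\<in>\<beta>. \<bar>c k\<bar> \<le> N"
  shows "\<bar>\<Sum>k\<in>\<beta>. a k * c k\<bar> \<le> (\<Sum>k\<in>\<beta>. \<bar>a k\<bar>) * N"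
proof -
  have "\<bar>\<Sum>k\<in>\<beta>. a k * c k\<bar> \<le> (\<Sum>k\<in>\<beta>. \<bar>a k * c k\<bar>)" by (rule sum_abs)
  also have "\<dots> \<le> (\<Sum>k\<in>\<beta>. \<bar>a k\<bar> * N)"
    using assms by (intro sum_mono) (simp add: abs_mult mult_left_mono)
  finally show ?thesis by (simp add: sum_distrib_right)
qed

lemma dev_bound:
  fixes \<Theta> :: "nat \<Rightarrow> ('n::{finite,linorder}) cmat"
  assumes om: "\<forall>i<m. om i \<in> \<beta>" and fin: "finite \<beta>" and bsub: "\<beta> \<subseteq> {1..d}"
    and orth: "\<forall>k\<in>{1..d}. \<forall>l\<in>{1..d}. minner (\<Theta> k) (\<Theta> l) = (if k = l then 1 else 0)"
    and m: "m > 0" and r: "\<rho> > 0" and g: "\<gamma> \<ge> 0" and nu: "\<nu> \<ge> 0"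
  shows "\<bar>psi \<Theta> m om xi \<nu> \<rho> \<gamma> Gt Xb Xt D - phi \<Theta> \<beta> p G D\<bar>
     \<le> (1/2 * (\<Sum>k\<in>\<beta>. \<bar>cnt om m k / real m - p k\<bar>) + \<rho> * \<gamma> / 2) * (norm D)\<^sup>2
       + (\<nu> * (\<Sum>k\<in>\<beta>. \<bar>nse om xi m k / (real m * \<rho>)\<bar>) + norm (Gt - G) + \<gamma> * norm (Xb - Xt)) * norm D"
proof -
  let ?c = "\<lambda>k. \<Theta> k \<bullet> D"
  have cb: "\<forall>k\<in>\<beta>. \<bar>?c k\<bar> \<le> norm D" using bsub coord_le_norm[OF orth] by blast
  have e1: "(\<Sum>i<m. (\<Theta> (om i) \<bullet> D)\<^sup>2) = (\<Sum>k\<in>\<beta>. cnt om m k * (?c k)\<^sup>2)"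
    using regroup[OF om fin, of "\<lambda>i. 1" "\<lambda>k. (?c k)\<^sup>2"] unfolding cnt_def by (simp add: mult.commute)
  have e2: "(\<Sum>i<m. xi i * (\<Theta> (om i) \<bullet> D)) = (\<Sum>k\<in>\<beta>. nse om xi m k * ?c k)"
    using regroup[OF om fin, of xi ?c] unfolding nse_def by (simp add: mult.commute)
  have eq: "psi \<Theta> m om xi \<nu> \<rho> \<gamma> Gt Xb Xt D - phi \<Theta> \<beta> p G D
     = 1/2 * (\<Sum>k\<in>\<beta>. (cnt om m k / real m - p k) * (?c k)\<^sup>2)
       - \<nu> * (\<Sum>k\<in>\<beta>. (nse om xi m k / (real m * \<rho>)) * ?c k)
       + (Gt - G) \<bullet> D + \<gamma> * ((Xb - Xt) \<bullet> D) + \<rho> * \<gamma> / 2 * (norm D)\<^sup>2"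
    unfolding psi_def phi_def qf_def e1 e2
    by (simp add: sum_distrib_left sum_subtractf left_diff_distrib inner_diff_left algebra_simps sum_divide_distrib)
  have b1: "\<bar>1/2 * (\<Sum>k\<in>\<beta>. (cnt om m k / real m - p k) * (?c k)\<^sup>2)\<bar> \<le> 1/2 * (\<Sum>k\<in>\<beta>. \<bar>cnt om m k / real m - p k\<bar>) * (norm D)\<^sup>2"
    using sum_abs_bound1[OF cb, of "\<lambda>k. cnt om m k / real m - p k"] by (simp add: abs_mult)
  have b2: "\<bar>\<nu> * (\<Sum>k\<in>\<beta>. (nse om xi m k / (real m * \<rho>)) * ?c k)\<bar> \<le> \<nu> * ((\<Sum>k\<in>\<beta>. \<bar>nse om xi m k / (real m * \<rho>)\<bar>) * norm D)"
    using sum_abs_bound2[OF cb, of "\<lambda>k. nse om xi m k / (real m * \<rho>)"] nu by (simp add: abs_mult mult_left_mono)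
  have b3: "\<bar>(Gt - G) \<bullet> D\<bar> \<le> norm (Gt - G) * norm D" by (rule Cauchy_Schwarz_ineq2)
  have b4: "\<bar>\<gamma> * ((Xb - Xt) \<bullet> D)\<bar> \<le> \<gamma> * (norm (Xb - Xt) * norm D)"
    using Cauchy_Schwarz_ineq2[of "Xb - Xt" D] g by (simp add: abs_mult mult_left_mono)
  have b5: "\<bar>\<rho> * \<gamma> / 2 * (norm D)\<^sup>2\<bar> = \<rho> * \<gamma> / 2 * (norm D)\<^sup>2" using r g by simp
  show ?thesis unfolding eq using b1 b2 b3 b4 b5 by (simp add: algebra_simps)
qed



lemma (in prob_space) second_moment:
  fixes W :: "nat \<Rightarrow> 'a \<Rightarrow> real"
  assumes meas: "\<And>i. W i \<in> borel_measurable M"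
    and sq: "\<And>i. integrable M (\<lambda>w. (W i w)\<^sup>2)"
    and orth: "\<And>i j. i \<noteq> j \<Longrightarrow> expectation (\<lambda>w. W i w * W j w) = 0"
    and var: "\<And>i. expectation (\<lambda>w. (W i w)\<^sup>2) \<le> 1"
    and t: "t > 0"
  shows "prob {w\<in>space M. \<bar>\<Sum>i<m. W i w\<bar> > t} \<le> real m / t\<^sup>2"
proof -
  have [measurable]: "W i \<in> borel_measurable M" for i by (rule meas)
  have intp: "integrable M (\<lambda>w. W i w * W j w)" for i j
  proof (rule Bochner_Integration.integrable_bound[of _ "\<lambda>w. (W i w)\<^sup>2 + (W j w)\<^sup>2"])
    show "integrable M (\<lambda>w. (W i w)\<^sup>2 + (W j w)\<^sup>2)" using sq by auto
    show "(\<lambda>w. W i w * W j w) \<in> borel_measurable M" by measurable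
    show "AE w in M. norm (W i w * W j w) \<le> norm ((W i w)\<^sup>2 + (W j w)\<^sup>2)"
    proof (intro AE_I2)
      fix w
      have "2 * \<bar>W i w\<bar> * \<bar>W j w\<bar> \<le> (W i w)\<^sup>2 + (W j w)\<^sup>2"
        using sum_squares_bound[of "\<bar>W i w\<bar>" "\<bar>W j w\<bar>"] by simp
      moreover have "\<bar>W i w\<bar> * \<bar>W j w\<bar> \<ge> 0" by simp
      ultimately have "\<bar>W i w\<bar> * \<bar>W j w\<bar> \<le> (W i w)\<^sup>2 + (W j w)\<^sup>2" by linarith
      then show "norm (W i w * W j w) \<le> norm ((W i w)\<^sup>2 + (W j w)\<^sup>2)" by (simp add: abs_mult)
    qed
  qed
  let ?S = "\<lambda>w. \<Sum>i<m. W i w"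
  have sqS: "(?S w)\<^sup>2 = (\<Sum>i<m. \<Sum>j<m. W i w * W j w)" for w
    by (simp add: power2_eq_square sum_product)
  have intS: "integrable M (\<lambda>w. (?S w)\<^sup>2)" unfolding sqS using intp by auto
  have ES: "expectation (\<lambda>w. (?S w)\<^sup>2) \<le> real m"
  proof -
    have "expectation (\<lambda>w. (?S w)\<^sup>2) = (\<Sum>i<m. \<Sum>j<m. expectation (\<lambda>w. W i w * W j w))"
      unfolding sqS using intp by (simp add: Bochner_Integration.integral_sum)
    also have "\<dots> = (\<Sum>i<m. expectation (\<lambda>w. (W i w)\<^sup>2))"
    proof (intro sum.cong refl)
      fix i assume "i \<in> {..<m}"
      then have "(\<Sum>j<m. expectation (\<lambda>w. W i w * W j w)) = (\<Sum>j<m. if j = i then expectation (\<lambda>w. (W i w)\<^sup>2) else 0)"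
        using orth by (intro sum.cong refl) (auto simp: power2_eq_square)
      also have "\<dots> = expectation (\<lambda>w. (W i w)\<^sup>2)" using \<open>i \<in> {..<m}\<close> by simp
      finally show "(\<Sum>j<m. expectation (\<lambda>w. W i w * W j w)) = expectation (\<lambda>w. (W i w)\<^sup>2)" .
    qed
    also have "\<dots> \<le> (\<Sum>i<m. 1)" using var by (intro sum_mono) auto
    finally show ?thesis by simp
  qed
  have "prob {w\<in>space M. \<bar>?S w\<bar> > t} \<le> prob {w\<in>space M. (?S w)\<^sup>2 \<ge> t\<^sup>2}"
  proof (rule finite_measure_mono)
    show "{w\<in>space M. \<bar>?S w\<bar> > t} \<subseteq> {w\<in>space M. (?S w)\<^sup>2 \<ge> t\<^sup>2}"
    proof
      fix w assume "w \<in> {w\<in>space M. \<bar>?S w\<bar> > t}"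
      then have "\<bar>?S w\<bar> > t" "w \<in> space M" by auto
      then have "t\<^sup>2 \<le> \<bar>?S w\<bar>\<^sup>2" using t by (intro power_mono) auto
      then show "w \<in> {w\<in>space M. (?S w)\<^sup>2 \<ge> t\<^sup>2}" using \<open>w \<in> space M\<close> by simp
    qed
    show "{w\<in>space M. (?S w)\<^sup>2 \<ge> t\<^sup>2} \<in> events" by measurable
  qed
  also have "\<dots> \<le> expectation (\<lambda>w. (?S w)\<^sup>2) / t\<^sup>2"
    by (rule integral_Markov_inequality_measure[OF intS, of "space M"]) (use t in auto)
  also have "\<dots> \<le> real m / t\<^sup>2" using ES t by (intro divide_right_mono) auto
  finally show ?thesis .
qed



locale model = prob_space M for M :: "'a measure" +
  fixes \<omega> :: "nat \<Rightarrow> 'a \<Rightarrow> nat" and \<xi> :: "nat \<Rightarrow> 'a \<Rightarrow> real" and p :: "nat \<Rightarrow> real" and \<beta> :: "nat set"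
  assumes \<omega>_rv: "\<forall>i. \<omega> i \<in> measurable M (count_space UNIV)"
    and \<xi>_rv: "\<forall>i. \<xi> i \<in> borel_measurable M"
    and indep: "indep_vars (\<lambda>j. case j of Inl _ \<Rightarrow> borel | Inr _ \<Rightarrow> borel)
                  (\<lambda>j. case j of Inl i \<Rightarrow> (\<lambda>w. real (\<omega> i w)) | Inr i \<Rightarrow> \<xi> i) UNIV"
    and \<omega>_dist_beta: "\<forall>i. \<forall>k\<in>\<beta>. measure M {w\<in>space M. \<omega> i w = k} = p k"
    and \<xi>_int: "\<forall>i. integrable M (\<xi> i) \<and> integrable M (\<lambda>w. (\<xi> i w)\<^sup>2)"
    and \<xi>_mean: "\<forall>i. expectation (\<xi> i) = 0"
    and \<xi>_var: "\<forall>i. expectation (\<lambda>w. (\<xi> i w)\<^sup>2) = 1"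
begin

definition Ind :: "nat \<Rightarrow> nat \<Rightarrow> 'a \<Rightarrow> real" where
  "Ind k i w = (if \<omega> i w = k then 1 else 0)"

lemma Ind_meas[measurable]: "Ind k i \<in> borel_measurable M"
proof -
  have [measurable]: "\<omega> i \<in> measurable M (count_space UNIV)" using \<omega>_rv by blast
  show ?thesis unfolding Ind_def by measurable
qed

lemma xi_meas[measurable]: "\<xi> i \<in> borel_measurable M" using \<xi>_rv by blast

lemma Ind_int: "integrable M (Ind k i)"
  by (rule integrable_const_bound[where B=1]) (auto simp: Ind_def)

lemma Ind_E: "k \<in> \<beta> \<Longrightarrow> expectation (Ind k i) = p k"
proof -
  assume k: "k \<in> \<beta>"
  have [measurable]: "\<omega> i \<in> measurable M (count_space UNIV)" using \<omega>_rv by blast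
  have "expectation (Ind k i) = expectation (indicator {w\<in>space M. \<omega> i w = k})"
    by (intro Bochner_Integration.integral_cong) (auto simp: Ind_def indicator_def)
  also have "\<dots> = prob {w\<in>space M. \<omega> i w = k}" unfolding Bochner_Integration.integral_indicator
    by (rule arg_cong[where f="measure M"]) auto
  finally show ?thesis using \<omega>_dist_beta k by simp
qed

definition Yk :: "nat \<Rightarrow> nat + nat \<Rightarrow> 'a \<Rightarrow> real" where
  "Yk k j w = (case j of Inl i \<Rightarrow> Ind k i w | Inr i \<Rightarrow> \<xi> i w)"

lemma Yk_Inl[simp]: "Yk k (Inl i) = Ind k i" by (rule ext) (simp add: Yk_def)
lemma Yk_Inr[simp]: "Yk k (Inr i) = \<xi> i" by (rule ext) (simp add: Yk_def)

lemma indep_Y: "indep_vars (\<lambda>_. borel) (Yk k) UNIV"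
proof -
  have e: "(\<lambda>j::nat+nat. case j of Inl _ \<Rightarrow> borel | Inr _ \<Rightarrow> (borel :: real measure)) = (\<lambda>_. borel)"
    by (rule ext) (simp split: sum.split)
  define X0 where "X0 = (\<lambda>j. case j of Inl i \<Rightarrow> (\<lambda>w. real (\<omega> i w)) | Inr i \<Rightarrow> \<xi> i)"
  have i0: "indep_vars (\<lambda>_. borel) X0 UNIV"
    using indep unfolding e X0_def .
  define h where "h j x = (case j of Inl _ \<Rightarrow> (if x = real k then 1 else 0) | Inr _ \<Rightarrow> x)" for j :: "nat + nat" and x :: real
  have "indep_vars (\<lambda>_. borel) (\<lambda>j w. h j (X0 j w)) UNIV"
  proof (rule indep_vars_compose2[OF i0])
    fix j :: "nat + nat"
    show "h j \<in> borel_measurable borel" unfolding h_def by (cases j) auto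
  qed
  moreover have "(\<lambda>j w. h j (X0 j w)) = Yk k"
    by (intro ext) (simp add: h_def X0_def Yk_def Ind_def split: sum.split)
  ultimately show ?thesis by simp
qed

lemma Yk_int: "integrable M (Yk k j)"
  using Ind_int \<xi>_int by (cases j) auto

lemma E_prod: "finite I \<Longrightarrow> expectation (\<lambda>w. \<Prod>j\<in>I. Yk k j w) = (\<Prod>j\<in>I. expectation (Yk k j))"
  using indep_vars_lebesgue_integral[of I "Yk k"] indep_vars_subset[OF indep_Y] Yk_int by auto

lemma E_Ind2: "i \<noteq> j \<Longrightarrow> k \<in> \<beta> \<Longrightarrow> expectation (\<lambda>w. Ind k i w * Ind k j w) = p k * p k"
  using E_prod[of "{Inl i, Inl j}" k] Ind_E by (simp add: Yk_def)

lemma E_noise2: "i \<noteq> j \<Longrightarrow> expectation (\<lambda>w. (\<xi> i w * Ind k i w) * (\<xi> j w * Ind k j w)) = 0"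
proof -
  assume ij: "i \<noteq> j"
  have "expectation (\<lambda>w. \<Prod>j\<in>{Inr i, Inl i, Inl j, Inr j}. Yk k j w) = (\<Prod>j\<in>{Inr i, Inl i, Inl j, Inr j}. expectation (Yk k j))"
    by (rule E_prod) simp
  also have "\<dots> = 0" using ij \<xi>_mean by (simp add: Yk_def)
  finally show ?thesis using ij by (simp add: Yk_def mult_ac)
qed

lemma p_range: "k \<in> \<beta> \<Longrightarrow> 0 \<le> p k \<and> p k \<le> 1"
  using \<omega>_dist_beta by (metis measure_nonneg prob_le_1)

lemma lln_cnt:
  assumes k: "k \<in> \<beta>" and m: "m > 0" and s: "s > 0"
  shows "prob {w\<in>space M. \<bar>(\<Sum>i<m. if \<omega> i w = k then 1 else 0) / real m - p k\<bar> > s} \<le> 1 / (real m * s\<^sup>2)"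
proof -
  define W where "W i w = Ind k i w - p k" for i w
  have [measurable]: "W i \<in> borel_measurable M" for i unfolding W_def by measurable
  have pr: "0 \<le> p k" "p k \<le> 1" using p_range[OF k] by auto
  have Wb: "\<bar>W i w\<bar> \<le> 1" for i w using pr by (auto simp: W_def Ind_def)
  have W2b: "(W i w)\<^sup>2 \<le> 1" for i w
  proof -
    have "\<bar>W i w\<bar>\<^sup>2 \<le> 1\<^sup>2" using Wb[of i w] by (intro power_mono) auto
    then show ?thesis by simp
  qed
  have sq: "integrable M (\<lambda>w. (W i w)\<^sup>2)" for i
    by (rule integrable_const_bound[where B=1]) (use W2b in auto)
  have orth: "expectation (\<lambda>w. W i w * W j w) = 0" if ij: "i \<noteq> j" for i j
  proof -
    have "(\<lambda>w. W i w * W j w) = (\<lambda>w. Ind k i w * Ind k j w - p k * Ind k i w - p k * Ind k j w + p k * p k)"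
      by (rule ext) (simp add: W_def algebra_simps)
    moreover have "integrable M (\<lambda>w. Ind k i w * Ind k j w)"
    proof (rule integrable_const_bound[where B=1])
      show "AE w in M. norm (Ind k i w * Ind k j w) \<le> 1" by (simp add: Ind_def)
      show "(\<lambda>w. Ind k i w * Ind k j w) \<in> borel_measurable M" by measurable
    qed
    ultimately show ?thesis using Ind_int E_Ind2[OF ij k] Ind_E[OF k] by (simp add: prob_space)
  qed
  have var: "expectation (\<lambda>w. (W i w)\<^sup>2) \<le> 1" for i
  proof -
    have "expectation (\<lambda>w. (W i w)\<^sup>2) \<le> expectation (\<lambda>w. 1)"
      using sq W2b by (intro integral_mono) auto
    then show ?thesis by (simp add: prob_space)
  qed
  have bound: "prob {w\<in>space M. \<bar>\<Sum>i<m. W i w\<bar> > real m * s} \<le> real m / (real m * s)\<^sup>2"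
    by (rule second_moment) (use sq orth var m s in auto)
  have eq: "{w\<in>space M. \<bar>(\<Sum>i<m. if \<omega> i w = k then 1 else 0) / real m - p k\<bar> > s}
        = {w\<in>space M. \<bar>\<Sum>i<m. W i w\<bar> > real m * s}"
  proof -
    have "(\<Sum>i<m. W i w) = real m * ((\<Sum>i<m. if \<omega> i w = k then 1 else 0) / real m - p k)" for w
      using m by (simp add: W_def Ind_def sum_subtractf field_simps)
    moreover have "\<bar>real m * x\<bar> > real m * s \<longleftrightarrow> \<bar>x\<bar> > s" for x using m by (simp add: abs_mult)
    ultimately show ?thesis by auto
  qed
  have "real m / (real m * s)\<^sup>2 = 1 / (real m * s\<^sup>2)" using m s by (simp add: power2_eq_square field_simps)
  then show ?thesis using bound eq by simp
qed

lemma lln_nse: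
  assumes m: "m > 0" and r: "\<rho> > 0" and s: "s > 0"
  shows "prob {w\<in>space M. \<bar>(\<Sum>i<m. if \<omega> i w = k then \<xi> i w else 0) / (real m * \<rho>)\<bar> > s} \<le> 1 / (real m * \<rho>\<^sup>2 * s\<^sup>2)"
proof -
  define W where "W i w = \<xi> i w * Ind k i w" for i w
  have [measurable]: "W i \<in> borel_measurable M" for i unfolding W_def by measurable
  have W2b: "(W i w)\<^sup>2 \<le> (\<xi> i w)\<^sup>2" for i w by (simp add: W_def Ind_def)
  have sq: "integrable M (\<lambda>w. (W i w)\<^sup>2)" for i
  proof (rule Bochner_Integration.integrable_bound[of _ "\<lambda>w. (\<xi> i w)\<^sup>2"])
    show "integrable M (\<lambda>w. (\<xi> i w)\<^sup>2)" using \<xi>_int by blast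
    show "(\<lambda>w. (W i w)\<^sup>2) \<in> borel_measurable M" by measurable
    show "AE w in M. norm ((W i w)\<^sup>2) \<le> norm ((\<xi> i w)\<^sup>2)" using W2b by simp
  qed
  have orth: "expectation (\<lambda>w. W i w * W j w) = 0" if ij: "i \<noteq> j" for i j
    using E_noise2[OF ij, of k] by (simp add: W_def)
  have var: "expectation (\<lambda>w. (W i w)\<^sup>2) \<le> 1" for i
  proof -
    have "expectation (\<lambda>w. (W i w)\<^sup>2) \<le> expectation (\<lambda>w. (\<xi> i w)\<^sup>2)"
      using sq \<xi>_int W2b by (intro integral_mono) auto
    then show ?thesis using \<xi>_var by simp
  qed
  have bound: "prob {w\<in>space M. \<bar>\<Sum>i<m. W i w\<bar> > real m * \<rho> * s} \<le> real m / (real m * \<rho> * s)\<^sup>2"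
    by (rule second_moment) (use sq orth var m s r in auto)
  have eq: "{w\<in>space M. \<bar>(\<Sum>i<m. if \<omega> i w = k then \<xi> i w else 0) / (real m * \<rho>)\<bar> > s}
        = {w\<in>space M. \<bar>\<Sum>i<m. W i w\<bar> > real m * \<rho> * s}"
  proof -
    have "(\<Sum>i<m. W i w) = (\<Sum>i<m. if \<omega> i w = k then \<xi> i w else 0)" for w
      by (intro sum.cong refl) (simp add: W_def Ind_def)
    moreover have "\<bar>x / (real m * \<rho>)\<bar> > s \<longleftrightarrow> \<bar>x\<bar> > real m * \<rho> * s" for x
    proof -
      have mr: "real m * \<rho> > 0" using m r by simp
      have "\<bar>x / (real m * \<rho>)\<bar> = \<bar>x\<bar> / (real m * \<rho>)" using mr by simp
      then show ?thesis using mr by (simp add: less_divide_eq mult.commute)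
    qed
    ultimately show ?thesis by auto
  qed
  have "real m / (real m * \<rho> * s)\<^sup>2 = 1 / (real m * \<rho>\<^sup>2 * s\<^sup>2)" using m s r by (simp add: power2_eq_square field_simps)
  then show ?thesis using bound eq by simp
qed

end



definition Kset :: "bool \<Rightarrow> (nat \<Rightarrow> ('n::{finite,linorder}) cmat) \<Rightarrow> nat set \<Rightarrow> nat \<Rightarrow> 'n cmat \<Rightarrow> 'n cmat set" where
  "Kset b \<Theta> \<alpha> r P = {D. D \<in> Sn b \<and> (\<forall>k\<in>\<alpha>. minner (\<Theta> k) D = 0) \<and> psd (lower_block r P D)}"

lemma Kset_alt: "Kset b \<Theta> \<alpha> r P = {D. D \<in> Sn b \<and> (\<forall>k\<in>\<alpha>. \<Theta> k \<bullet> D = 0) \<and> (\<forall>v. Re (qform D (P *v proj2 r v)) \<ge> 0)}"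
  unfolding Kset_def minner_inner using psd_lower_I psd_lower_D by (auto simp: Sn_def)

lemma closed_Sn: "closed (Sn b :: ('n::finite) cmat set)"
proof -
  have eq: "Sn b = {X. ctrans X = X} \<inter> {X. b \<longrightarrow> (\<forall>i j. Im (X $ i $ j) = 0)}"
    by (auto simp: Sn_def herm_def)
  have "closed {X::'n cmat. ctrans X = X}"
    unfolding ctrans_def by (intro closed_Collect_eq continuous_intros)
  moreover have "closed {X::'n cmat. b \<longrightarrow> (\<forall>i j. Im (X $ i $ j) = 0)}"
    by (cases b) (auto intro!: closed_Collect_all closed_Collect_eq continuous_intros)
  ultimately have "closed ({X::'n cmat. ctrans X = X} \<inter> {X. b \<longrightarrow> (\<forall>i j. Im (X $ i $ j) = 0)})"
    by (rule closed_Int)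
  then show ?thesis unfolding eq .
qed

lemma closed_Kset: "closed (Kset b \<Theta> \<alpha> r P)"
proof -
  have "Kset b \<Theta> \<alpha> r P = Sn b \<inter> (\<Inter>k\<in>\<alpha>. {D. \<Theta> k \<bullet> D = 0}) \<inter> (\<Inter>v. {D. Re (qform D (P *v proj2 r v)) \<ge> 0})"
    unfolding Kset_alt by auto
  moreover have "closed {D. \<Theta> k \<bullet> D = 0}" for k by (intro closed_Collect_eq continuous_intros)
  moreover have "closed {D. Re (qform D w) \<ge> 0}" for w
    unfolding qform_def by (intro closed_Collect_le continuous_intros)
  ultimately show ?thesis using closed_Sn by (auto intro!: closed_Int closed_INT)
qed

lemma convex_Kset: "convex (Kset b \<Theta> \<alpha> r P)"
  unfolding Kset_alt
proof (intro convexI, clarify, intro conjI ballI allI)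
  fix x y :: "'a cmat" and u v :: real
  assume x: "x \<in> Sn b" "\<forall>k\<in>\<alpha>. \<Theta> k \<bullet> x = 0" "\<forall>w. 0 \<le> Re (qform x (P *v proj2 r w))"
    and y: "y \<in> Sn b" "\<forall>k\<in>\<alpha>. \<Theta> k \<bullet> y = 0" "\<forall>w. 0 \<le> Re (qform y (P *v proj2 r w))"
    and uv: "0 \<le> u" "0 \<le> v" "u + v = 1"
  show "u *\<^sub>R x + v *\<^sub>R y \<in> Sn b" using x y by (intro Sn_add Sn_scaleR)
  show "\<Theta> k \<bullet> (u *\<^sub>R x + v *\<^sub>R y) = 0" if "k \<in> \<alpha>" for k using x y that by (simp add: inner_add_right)
  show "0 \<le> Re (qform (u *\<^sub>R x + v *\<^sub>R y) (P *v proj2 r w))" for w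
    using x(3)[rule_format, of w] y(3)[rule_format, of w] uv by (simp add: qform_add qform_scaleR)
qed

lemma zero_Kset: "0 \<in> Kset b \<Theta> \<alpha> r P"
  unfolding Kset_alt by (simp add: Sn_zero qform_def)

lemma Kset_diff:
  assumes "D \<in> Kset b \<Theta> \<alpha> r P" "E \<in> Kset b \<Theta> \<alpha> r P"
  shows "D - E \<in> Sn b" "\<forall>k\<in>\<alpha>. \<Theta> k \<bullet> (D - E) = 0"
  using assms unfolding Kset_alt by (auto intro: Sn_diff simp: inner_diff_right)

lemma qf_coer:
  fixes \<Theta> :: "nat \<Rightarrow> ('n::finite) cmat"
  assumes orth: "\<forall>k\<in>{1..d}. \<forall>l\<in>{1..d}. minner (\<Theta> k) (\<Theta> l) = (if k = l then 1 else 0)"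
    and span: "\<forall>X\<in>Sn b. \<exists>c. X = (\<Sum>k=1..d. c k *\<^sub>R \<Theta> k)"
    and D: "D \<in> Sn b" and al: "\<forall>k\<in>\<alpha>. \<Theta> k \<bullet> D = 0" and asub: "\<alpha> \<subseteq> {1..d}"
    and pm: "\<forall>k\<in>{1..d} - \<alpha>. pm \<le> p k" "pm \<ge> 0"
  shows "qf \<Theta> ({1..d} - \<alpha>) p D \<ge> pm * (norm D)\<^sup>2"
  unfolding qf_def norm_coords_beta[OF orth span D al asub]
  by (rule weighted_ge) (use pm in auto)

context model
begin

lemma omega_in_beta:
  assumes fin: "finite \<beta>" and ps: "(\<Sum>k\<in>\<beta>. p k) = 1"
  shows "prob {w\<in>space M. \<exists>i<m. \<omega> i w \<notin> \<beta>} = 0"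
proof -
  have [measurable]: "\<omega> i \<in> measurable M (count_space UNIV)" for i using \<omega>_rv by blast
  have one: "prob {w\<in>space M. \<omega> i w \<in> \<beta>} = 1" for i
  proof -
    have "{w\<in>space M. \<omega> i w \<in> \<beta>} = (\<Union>k\<in>\<beta>. {w\<in>space M. \<omega> i w = k})" by auto
    moreover have "prob (\<Union>k\<in>\<beta>. {w\<in>space M. \<omega> i w = k}) = (\<Sum>k\<in>\<beta>. prob {w\<in>space M. \<omega> i w = k})"
      by (rule measure_finite_Union) (auto simp: fin disjoint_family_on_def)
    ultimately have "prob {w\<in>space M. \<omega> i w \<in> \<beta>} = (\<Sum>k\<in>\<beta>. prob {w\<in>space M. \<omega> i w = k})" by simp
    also have "\<dots> = (\<Sum>k\<in>\<beta>. p k)" using \<omega>_dist_beta by simp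
    finally show ?thesis using ps by simp
  qed
  have zero: "prob {w\<in>space M. \<omega> i w \<notin> \<beta>} = 0" for i
  proof -
    have "{w\<in>space M. \<omega> i w \<notin> \<beta>} = space M - {w\<in>space M. \<omega> i w \<in> \<beta>}" by auto
    then show ?thesis using prob_compl[of "{w\<in>space M. \<omega> i w \<in> \<beta>}"] one[of i] by simp
  qed
  have "{w\<in>space M. \<exists>i<m. \<omega> i w \<notin> \<beta>} = (\<Union>i\<in>{..<m}. {w\<in>space M. \<omega> i w \<notin> \<beta>})" by auto
  moreover have "measure M (\<Union>i\<in>{..<m}. {w\<in>space M. \<omega> i w \<notin> \<beta>}) \<le> (\<Sum>i<m. prob {w\<in>space M. \<omega> i w \<notin> \<beta>})"
    by (rule measure_UNION_le) auto
  ultimately show ?thesis using zero by (simp add: measure_nonneg antisym)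
qed

end



lemma eig_facts:
  fixes Xbar Pbar :: "('n::{finite,linorder}) cmat"
  assumes Xbar_psd: "psd Xbar" and rank_Xbar: "rank Xbar = r" and r_pos: "r \<ge> 1"
    and u: "unitary Pbar" and X: "Xbar = Pbar ** diagm (eigvals Xbar) ** ctrans Pbar"
  shows "\<forall>i. r \<le> pos i \<longrightarrow> eigvals Xbar $ i = 0"
    and "\<exists>lm>0. \<forall>i. pos i < r \<longrightarrow> eigvals Xbar $ i \<ge> lm"
proof -
  let ?l = "eigvals Xbar"
  have ni: "nonincr ?l" by (rule eigvals_nonincr[OF u X])
  have nn: "\<And>i. ?l $ i \<ge> 0" using psd_diag_nonneg[OF u X Xbar_psd] by blast
  have c: "card {i. ?l $ i \<noteq> 0} = r" using rank_decomp[OF u X] rank_Xbar by simp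
  note es = eig_structure[OF ni nn c]
  show "\<forall>i. r \<le> pos i \<longrightarrow> ?l $ i = 0" using es(2) by blast
  let ?A = "{i. ?l $ i \<noteq> 0}"
  have ne: "?A \<noteq> {}"
  proof
    assume "?A = {}"
    then have "card ?A = 0" by simp
    then show False using c r_pos by simp
  qed
  have fin: "finite ?A" by simp
  define lm where "lm = Min ((\<lambda>i. ?l $ i) ` ?A)"
  have "lm \<in> (\<lambda>i. ?l $ i) ` ?A" unfolding lm_def using ne fin by (intro Min_in) auto
  then have "lm > 0" using nn by (auto simp: less_le)
  moreover have "?l $ i \<ge> lm" if "pos i < r" for i
  proof -
    have "?l $ i > 0" using es(1) that by blast
    then have "i \<in> ?A" by simp
    then show ?thesis unfolding lm_def using fin by (intro Min_le) auto
  qed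
  ultimately show "\<exists>lm>0. \<forall>i. pos i < r \<longrightarrow> ?l $ i \<ge> lm" by blast
qed

lemma approx:
  fixes P Xb X0 Dh :: "('n::{finite,linorder}) cmat"
  assumes u: "unitary P" and X: "Xb = P ** diagm l ** ctrans P"
    and z: "\<forall>i. r \<le> pos i \<longrightarrow> l $ i = 0" and lm: "lm > 0" and lpos: "\<forall>i. pos i < r \<longrightarrow> l $ i \<ge> lm"
    and XbS: "Xb \<in> Sn b" and Dh: "Dh \<in> Kset b \<Theta> \<alpha> r P" and X0: "X0 \<in> Sn b" "pd X0"
    and eps: "\<epsilon> > 0"
  shows "\<exists>t0>0. \<forall>t. 0 \<le> t \<and> t \<le> t0 \<longrightarrow> psd (Xb + t *\<^sub>R (Dh + \<epsilon> *\<^sub>R (X0 - Xb)))"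
proof -
  obtain \<mu> where mu: "\<mu> > 0" "\<forall>u. Re (qform X0 u) \<ge> \<mu> * (norm u)\<^sup>2" using pd_uniform[OF X0(2)] by blast
  let ?H = "Dh + \<epsilon> *\<^sub>R (X0 - Xb)"
  have DhS: "Dh \<in> Sn b" and Dhq: "\<And>v. Re (qform Dh (P *v proj2 r v)) \<ge> 0" using Dh unfolding Kset_alt by auto
  have HS: "?H \<in> Sn b" using DhS X0 XbS by (intro Sn_add Sn_scaleR Sn_diff)
  have hyp: "Re (qform ?H (P *v proj2 r v)) \<ge> (\<epsilon> * \<mu>) * (norm (proj2 r v))\<^sup>2" for v
  proof -
    have z0: "qform Xb (P *v proj2 r v) = 0" by (rule qform_zero_block[OF u X]) (use z in auto)
    have "Re (qform ?H (P *v proj2 r v)) = Re (qform Dh (P *v proj2 r v)) + \<epsilon> * Re (qform X0 (P *v proj2 r v))"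
      by (simp add: qform_add qform_scaleR qform_diff z0)
    moreover have "Re (qform X0 (P *v proj2 r v)) \<ge> \<mu> * (norm (proj2 r v))\<^sup>2"
      using mu(2) unitary_norm[OF u] by metis
    moreover have "\<epsilon> * (\<mu> * (norm (proj2 r v))\<^sup>2) \<le> \<epsilon> * Re (qform X0 (P *v proj2 r v))"
      using calculation(2) eps by (intro mult_left_mono) auto
    ultimately show ?thesis using Dhq[of v] by (simp add: mult.assoc)
  qed
  show ?thesis
  proof (rule M3[OF u X lm])
    show "\<And>i. pos i < r \<Longrightarrow> lm \<le> l $ i" using lpos by blast
    show "\<And>i. r \<le> pos i \<Longrightarrow> l $ i = 0" using z by blast
    show "herm Xb" using XbS by (simp add: Sn_def)
    show "herm ?H" using HS by (simp add: Sn_def)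
    show "\<epsilon> * \<mu> > 0" using eps mu by simp
    show "\<And>v. Re (qform ?H (P *v proj2 r v)) \<ge> (\<epsilon> * \<mu>) * (norm (proj2 r v))\<^sup>2" by (rule hyp)
  qed
qed



lemma detC:
  fixes \<Theta> :: "nat \<Rightarrow> ('n::{finite,linorder}) cmat" and Xb Xh Xt H Dh P G :: "'n cmat"
  assumes r: "\<rho> > 0" and m: "m > 0" and g: "\<gamma> \<ge> 0" and nu: "\<nu> > 0"
    and orth: "\<forall>k\<in>{1..d}. \<forall>l\<in>{1..d}. minner (\<Theta> k) (\<Theta> l) = (if k = l then 1 else 0)"
    and bsub: "\<beta> \<subseteq> {1..d}" and fin: "finite \<beta>"
    and om: "\<forall>i<m. om i \<in> \<beta>"
    and u: "unitary P" and X: "Xb = P ** diagm l ** ctrans P" and z: "\<forall>i. r \<le> pos i \<longrightarrow> l $ i = 0"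
    and XbS: "Xb \<in> Sn b"
    and Xh: "Xh \<in> Sn b \<and> psd Xh \<and> (\<forall>k\<in>\<alpha>. minner (\<Theta> k) Xh = minner (\<Theta> k) Xb)"
    and optXh: "\<forall>X. X \<in> Sn b \<and> psd X \<and> (\<forall>k\<in>\<alpha>. minner (\<Theta> k) X = minner (\<Theta> k) Xb) \<longrightarrow>
          est_obj \<Theta> f m (\<lambda>i. minner (\<Theta> (om i)) Xb + \<nu> * xi i) om \<rho> \<gamma> Xt Xh
          \<le> est_obj \<Theta> f m (\<lambda>i. minner (\<Theta> (om i)) Xb + \<nu> * xi i) om \<rho> \<gamma> Xt X"
    and H: "H \<in> Sn b" "\<forall>k\<in>\<alpha>. \<Theta> k \<bullet> H = 0" "psd (Xb + \<rho> *\<^sub>R H)"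
    and Dh: "Dh \<in> Kset b \<Theta> \<alpha> r P"
    and strong: "\<forall>D\<in>Kset b \<Theta> \<alpha> r P. phi \<Theta> \<beta> p G D \<ge> phi \<Theta> \<beta> p G Dh + c * (norm (D - Dh))\<^sup>2"
    and c: "c > 0" and e: "e > 0"
    and aA: "1/2 * (\<Sum>k\<in>\<beta>. \<bar>cnt om m k / real m - p k\<bar>) + \<rho> * \<gamma> / 2 \<le> a0"
    and bB: "\<nu> * (\<Sum>k\<in>\<beta>. \<bar>nse om xi m k / (real m * \<rho>)\<bar>) + norm ((mat 1 - spectral_op f Xt) - G) + \<gamma> * norm (Xb - Xt) \<le> b0"
    and a0: "a0 \<le> c / 4" and b0: "b0 \<le> c * e / 4"
    and T0: "phi \<Theta> \<beta> p G H - phi \<Theta> \<beta> p G Dh + a0 * (norm H)\<^sup>2 + b0 * norm H + 2 * a0 * (norm Dh)\<^sup>2 + b0 * norm Dh \<le> c * e\<^sup>2 / 8"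
  shows "norm ((1 / \<rho>) *\<^sub>R (Xh - Xb) - Dh) \<le> e"
proof -
  define Dm where "Dm = (1 / \<rho>) *\<^sub>R (Xh - Xb)"
  have XhDm: "Xh = Xb + \<rho> *\<^sub>R Dm" using r by (simp add: Dm_def)
  have DmS: "Dm \<in> Sn b" unfolding Dm_def using Xh XbS by (intro Sn_scaleR Sn_diff) auto
  have Dmal: "\<forall>k\<in>\<alpha>. \<Theta> k \<bullet> Dm = 0" using Xh unfolding Dm_def by (simp add: minner_inner inner_diff_right)
  have Dmpsd: "psd (lower_block r P Dm)"
  proof (rule M2[OF u X])
    show "\<And>i. r \<le> pos i \<Longrightarrow> l $ i = 0" using z by blast
    show "herm Dm" using DmS by (simp add: Sn_def)
    show "\<rho> > 0" by (rule r)
    show "psd (Xb + \<rho> *\<^sub>R Dm)" using Xh XhDm by simp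
  qed
  have DmK: "Dm \<in> Kset b \<Theta> \<alpha> r P" unfolding Kset_def using DmS Dmal Dmpsd by (simp add: minner_inner)
  let ?y = "\<lambda>i. minner (\<Theta> (om i)) Xb + \<nu> * xi i"
  let ?Gt = "mat 1 - spectral_op f Xt"
  let ?psi = "psi \<Theta> m om xi \<nu> \<rho> \<gamma> ?Gt Xb Xt"
  have feasH: "Xb + \<rho> *\<^sub>R H \<in> Sn b \<and> psd (Xb + \<rho> *\<^sub>R H) \<and> (\<forall>k\<in>\<alpha>. minner (\<Theta> k) (Xb + \<rho> *\<^sub>R H) = minner (\<Theta> k) Xb)"
    using H XbS by (auto intro!: Sn_add Sn_scaleR simp: minner_inner inner_add_right)
  have "est_obj \<Theta> f m ?y om \<rho> \<gamma> Xt Xh \<le> est_obj \<Theta> f m ?y om \<rho> \<gamma> Xt (Xb + \<rho> *\<^sub>R H)"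
    using optXh feasH by blast
  then have "\<rho>\<^sup>2 * ?psi Dm \<le> \<rho>\<^sup>2 * ?psi H"
    unfolding XhDm est_psi[of \<rho>, OF less_imp_neq[OF r, symmetric]] by simp
  then have opt: "?psi Dm \<le> ?psi H" using r by simp
  define aa where "aa = 1/2 * (\<Sum>k\<in>\<beta>. \<bar>cnt om m k / real m - p k\<bar>) + \<rho> * \<gamma> / 2"
  define bb where "bb = \<nu> * (\<Sum>k\<in>\<beta>. \<bar>nse om xi m k / (real m * \<rho>)\<bar>) + norm (?Gt - G) + \<gamma> * norm (Xb - Xt)"
  have aa0: "aa \<ge> 0" unfolding aa_def using r g by (intro add_nonneg_nonneg mult_nonneg_nonneg sum_nonneg) auto
  have bb0: "bb \<ge> 0" unfolding bb_def using nu g by (intro add_nonneg_nonneg mult_nonneg_nonneg sum_nonneg) auto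
  have dev: "\<bar>?psi D - phi \<Theta> \<beta> p G D\<bar> \<le> a0 * (norm D)\<^sup>2 + b0 * norm D" for D
  proof -
    have "\<bar>?psi D - phi \<Theta> \<beta> p G D\<bar> \<le> aa * (norm D)\<^sup>2 + bb * norm D"
      unfolding aa_def bb_def by (rule dev_bound[OF om fin bsub orth m r g]) (use nu in simp)
    also have "\<dots> \<le> a0 * (norm D)\<^sup>2 + b0 * norm D"
      using aA bB unfolding aa_def[symmetric] bb_def[symmetric]
      by (intro add_mono mult_right_mono) auto
    finally show ?thesis .
  qed
  have "norm (Dm - Dh) \<le> e"
  proof (rule det_core[OF c e _ opt dev dev])
    show "phi \<Theta> \<beta> p G Dm \<ge> phi \<Theta> \<beta> p G Dh + c * (norm (Dm - Dh))\<^sup>2" using strong DmK by blast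
    show "a0 \<ge> 0" using aa0 aA unfolding aa_def[symmetric] by linarith
    show "b0 \<ge> 0" using bb0 bB unfolding bb_def[symmetric] by linarith
  qed (use a0 b0 T0 in auto)
  then show ?thesis unfolding Dm_def .
qed



lemma limA:
  fixes \<Theta> :: "nat \<Rightarrow> ('n::{finite,linorder}) cmat" and P G :: "'n cmat"
  assumes orth: "\<forall>k\<in>{1..d}. \<forall>l\<in>{1..d}. minner (\<Theta> k) (\<Theta> l) = (if k = l then 1 else 0)"
    and span: "\<forall>X\<in>Sn b. \<exists>c. X = (\<Sum>k=1..d. c k *\<^sub>R \<Theta> k)"
    and asub: "\<alpha> \<subseteq> {1..d}" and bdef: "\<beta> = {1..d} - \<alpha>"
    and ppos: "\<forall>k\<in>\<beta>. p k > 0" and psum: "(\<Sum>k\<in>\<beta>. p k) = 1"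
  shows "\<exists>c>0. \<exists>Dh\<in>Kset b \<Theta> \<alpha> r P. (\<forall>D\<in>Kset b \<Theta> \<alpha> r P. phi \<Theta> \<beta> p G Dh \<le> phi \<Theta> \<beta> p G D)
          \<and> (\<forall>D\<in>Kset b \<Theta> \<alpha> r P. phi \<Theta> \<beta> p G D \<ge> phi \<Theta> \<beta> p G Dh + c * (norm (D - Dh))\<^sup>2)"
proof -
  let ?K = "Kset b \<Theta> \<alpha> r P"
  have finb: "finite \<beta>" unfolding bdef by simp
  obtain pm where pm: "pm > 0" "\<forall>k\<in>\<beta>. pm \<le> p k" using pmin_exists[OF finb ppos psum] by blast
  have coerL: "qf \<Theta> \<beta> p D \<ge> pm * (norm D)\<^sup>2" if "D \<in> Sn b" "\<forall>k\<in>\<alpha>. \<Theta> k \<bullet> D = 0" for D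
    unfolding bdef by (rule qf_coer[OF orth span that asub]) (use pm bdef in auto)
  have coerK: "\<forall>D\<in>?K. qf \<Theta> \<beta> p D \<ge> pm * (norm D)\<^sup>2"
    using coerL unfolding Kset_alt by blast
  obtain Dh where Dh: "Dh \<in> ?K" and opt: "\<forall>D\<in>?K. phi \<Theta> \<beta> p G Dh \<le> phi \<Theta> \<beta> p G D"
    using limit_exists[OF closed_Kset zero_Kset pm(1) coerK] by blast
  have pnn: "\<forall>k\<in>\<beta>. p k \<ge> 0" using ppos by (simp add: less_imp_le)
  have strong: "phi \<Theta> \<beta> p G D \<ge> phi \<Theta> \<beta> p G Dh + pm / 2 * (norm (D - Dh))\<^sup>2" if D: "D \<in> ?K" for D
  proof -
    have "phi \<Theta> \<beta> p G D \<ge> phi \<Theta> \<beta> p G Dh + 1/2 * qf \<Theta> \<beta> p (D - Dh)"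
      by (rule var_ineq[OF convex_Kset Dh opt D pnn])
    moreover have "qf \<Theta> \<beta> p (D - Dh) \<ge> pm * (norm (D - Dh))\<^sup>2"
      using Kset_diff[OF D Dh] coerL by blast
    ultimately show ?thesis by simp
  qed
  show ?thesis using pm Dh opt strong by (intro exI[of _ "pm / 2"]) auto
qed



theorem mainTheorem12:
  fixes realcase :: bool
    and \<Theta> :: "nat \<Rightarrow> ('n::{finite,linorder}) cmat"
    and d :: nat and \<alpha> \<beta> :: "nat set" and p :: "nat \<Rightarrow> real"
    and Xbar Pbar :: "'n cmat" and r :: nat
    and M :: "'a measure"
    and \<omega> :: "nat \<Rightarrow> 'a \<Rightarrow> nat" and \<xi> :: "nat \<Rightarrow> 'a \<Rightarrow> real" and \<nu> :: real
    and f :: "(real, 'n) vec \<Rightarrow> (real, 'n) vec"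
    and Xt Xh :: "nat \<Rightarrow> 'a \<Rightarrow> 'n cmat"
    and \<rho> :: "nat \<Rightarrow> real" and \<gamma> :: "nat \<Rightarrow> 'a \<Rightarrow> real"
  assumes basis_in: "\<forall>k\<in>{1..d}. \<Theta> k \<in> Sn realcase"
    and basis_orth: "\<forall>k\<in>{1..d}. \<forall>l\<in>{1..d}. minner (\<Theta> k) (\<Theta> l) = (if k = l then 1 else 0)"
    and basis_span: "\<forall>X\<in>Sn realcase. \<exists>c. X = (\<Sum>k=1..d. c k *\<^sub>R \<Theta> k)"
    and alpha_sub: "\<alpha> \<subseteq> {1..d}"
    and beta_def: "\<beta> = {1..d} - \<alpha>"
    and p_pos: "\<forall>k\<in>\<beta>. p k > 0"
    and p_sum: "(\<Sum>k\<in>\<beta>. p k) = 1"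
    and Xbar_S: "Xbar \<in> Sn realcase" and Xbar_psd: "psd Xbar"
    and rank_Xbar: "rank Xbar = r" and r_pos: "r \<ge> 1"
    and Pbar_unitary: "unitary Pbar"
    and Pbar_real: "realcase \<longrightarrow> (\<forall>i j. Im (Pbar $ i $ j) = 0)"
    and Xbar_decomp: "Xbar = Pbar ** diagm (eigvals Xbar) ** ctrans Pbar"
    and prob: "prob_space M"
    and \<omega>_rv: "\<forall>i. \<omega> i \<in> measurable M (count_space UNIV)"
    and \<xi>_rv: "\<forall>i. \<xi> i \<in> borel_measurable M"
    and indep: "prob_space.indep_vars M
                  (\<lambda>j. case j of Inl _ \<Rightarrow> borel | Inr _ \<Rightarrow> borel)
                  (\<lambda>j. case j of Inl i \<Rightarrow> (\<lambda>w. real (\<omega> i w)) | Inr i \<Rightarrow> \<xi> i) UNIV"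
    and \<omega>_dist_beta: "\<forall>i. \<forall>k\<in>\<beta>. measure M {w\<in>space M. \<omega> i w = k} = p k"
    and \<omega>_dist_alpha: "\<forall>i. \<forall>k\<in>\<alpha>. measure M {w\<in>space M. \<omega> i w = k} = 0"
    and \<xi>_ident: "\<forall>i. distr M borel (\<xi> i) = distr M borel (\<xi> 0)"
    and \<xi>_int: "\<forall>i. integrable M (\<xi> i) \<and> integrable M (\<lambda>w. (\<xi> i w)\<^sup>2)"
    and \<xi>_mean: "\<forall>i. prob_space.expectation M (\<xi> i) = 0"
    and \<xi>_var: "\<forall>i. prob_space.expectation M (\<lambda>w. (\<xi> i w)\<^sup>2) = 1"
    and \<nu>_pos: "\<nu> > 0"
    and f_sym: "symmetric_fun f"
    and F_cont: "continuous (at Xbar within {X\<in>Sn realcase. psd X}) (spectral_op f)"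
    and Xt_rv: "\<forall>m. Xt m \<in> borel_measurable M"
    and Xt_psd: "\<forall>m. \<forall>w\<in>space M. Xt m w \<in> Sn realcase \<and> psd (Xt m w)"
    and Xt_conv: "conv_prob M Xt Xbar"
    and \<rho>_pos: "\<forall>m. \<rho> m > 0"
    and \<gamma>_rv: "\<forall>m. \<gamma> m \<in> borel_measurable M"
    and \<gamma>_nonneg: "\<forall>m. \<forall>w\<in>space M. \<gamma> m w \<ge> 0"
    and Xh_rv: "\<forall>m. Xh m \<in> borel_measurable M"
    and Xh_opt: "\<forall>m. \<forall>w\<in>space M.
       (Xh m w \<in> Sn realcase \<and> psd (Xh m w) \<and>
        (\<forall>k\<in>\<alpha>. minner (\<Theta> k) (Xh m w) = minner (\<Theta> k) Xbar)) \<and>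
       (\<forall>X. X \<in> Sn realcase \<and> psd X \<and> (\<forall>k\<in>\<alpha>. minner (\<Theta> k) X = minner (\<Theta> k) Xbar) \<longrightarrow>
          est_obj \<Theta> f m (\<lambda>i. minner (\<Theta> (\<omega> i w)) Xbar + \<nu> * \<xi> i w) (\<lambda>i. \<omega> i w)
                  (\<rho> m) (\<gamma> m w) (Xt m w) (Xh m w)
          \<le> est_obj \<Theta> f m (\<lambda>i. minner (\<Theta> (\<omega> i w)) Xbar + \<nu> * \<xi> i w) (\<lambda>i. \<omega> i w)
                  (\<rho> m) (\<gamma> m w) (Xt m w) X)"
    and slater: "\<exists>X0\<in>Sn realcase. pd X0 \<and> (\<forall>k\<in>\<alpha>. minner (\<Theta> k) X0 = minner (\<Theta> k) Xbar)"
    and \<rho>_lim: "\<rho> \<longlonglongrightarrow> 0"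
    and \<rho>_sqrt: "filterlim (\<lambda>m. sqrt (real m) * \<rho> m) at_top sequentially"
    and \<gamma>_Op1: "bounded_prob M \<gamma>"
  shows "\<exists>Dh. (Dh \<in> Sn realcase \<and> (\<forall>k\<in>\<alpha>. minner (\<Theta> k) Dh = 0) \<and> psd (lower_block r Pbar Dh)
              \<and> (\<forall>D. D \<in> Sn realcase \<and> (\<forall>k\<in>\<alpha>. minner (\<Theta> k) D = 0) \<and> psd (lower_block r Pbar D)
                     \<longrightarrow> limit_obj \<Theta> \<beta> p f Xbar Dh \<le> limit_obj \<Theta> \<beta> p f Xbar D))
          \<and> (\<forall>D. D \<in> Sn realcase \<and> (\<forall>k\<in>\<alpha>. minner (\<Theta> k) D = 0) \<and> psd (lower_block r Pbar D)
                 \<and> (\<forall>D'. D' \<in> Sn realcase \<and> (\<forall>k\<in>\<alpha>. minner (\<Theta> k) D' = 0) \<and> psd (lower_block r Pbar D')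
                        \<longrightarrow> limit_obj \<Theta> \<beta> p f Xbar D \<le> limit_obj \<Theta> \<beta> p f Xbar D')
                 \<longrightarrow> D = Dh)
          \<and> conv_prob M (\<lambda>m w. (1 / \<rho> m) *\<^sub>R (Xh m w - Xbar)) Dh"
proof -
  let ?S = "Sn realcase"
  let ?l = "eigvals Xbar"
  let ?K = "Kset realcase \<Theta> \<alpha> r Pbar"
  let ?G = "mat 1 - spectral_op f Xbar"
  have z: "\<forall>i. r \<le> pos i \<longrightarrow> ?l $ i = 0" and "\<exists>lm>0. \<forall>i. pos i < r \<longrightarrow> ?l $ i \<ge> lm"
    using eig_facts[OF Xbar_psd rank_Xbar r_pos Pbar_unitary Xbar_decomp] by blast+
  then obtain lm where lm: "lm > 0" "\<forall>i. pos i < r \<longrightarrow> ?l $ i \<ge> lm" by blast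
  have bsub: "\<beta> \<subseteq> {1..d}" and finb: "finite \<beta>" using beta_def by auto
  obtain c Dh where c: "c > 0" and Dh: "Dh \<in> ?K"
    and opt: "\<forall>D\<in>?K. phi \<Theta> \<beta> p ?G Dh \<le> phi \<Theta> \<beta> p ?G D"
    and strong: "\<forall>D\<in>?K. phi \<Theta> \<beta> p ?G D \<ge> phi \<Theta> \<beta> p ?G Dh + c * (norm (D - Dh))\<^sup>2"
    using limA[OF basis_orth basis_span alpha_sub beta_def p_pos p_sum, of r Pbar ?G] by blast
  have lo: "limit_obj \<Theta> \<beta> p f Xbar D = phi \<Theta> \<beta> p ?G D" for D
    unfolding limit_obj_eq phi_def qf_def by simp
  have Kmem: "D \<in> ?K \<longleftrightarrow> D \<in> ?S \<and> (\<forall>k\<in>\<alpha>. minner (\<Theta> k) D = 0) \<and> psd (lower_block r Pbar D)" for D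
    unfolding Kset_def by simp
  have part1: "Dh \<in> ?S \<and> (\<forall>k\<in>\<alpha>. minner (\<Theta> k) Dh = 0) \<and> psd (lower_block r Pbar Dh)
              \<and> (\<forall>D. D \<in> ?S \<and> (\<forall>k\<in>\<alpha>. minner (\<Theta> k) D = 0) \<and> psd (lower_block r Pbar D)
                     \<longrightarrow> limit_obj \<Theta> \<beta> p f Xbar Dh \<le> limit_obj \<Theta> \<beta> p f Xbar D)"
    using Dh opt unfolding Ball_def Kmem lo by blast
  have part2: "\<forall>D. D \<in> ?S \<and> (\<forall>k\<in>\<alpha>. minner (\<Theta> k) D = 0) \<and> psd (lower_block r Pbar D)
                 \<and> (\<forall>D'. D' \<in> ?S \<and> (\<forall>k\<in>\<alpha>. minner (\<Theta> k) D' = 0) \<and> psd (lower_block r Pbar D')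
                        \<longrightarrow> limit_obj \<Theta> \<beta> p f Xbar D \<le> limit_obj \<Theta> \<beta> p f Xbar D')
                 \<longrightarrow> D = Dh"
  proof (intro allI impI)
    fix D assume a: "D \<in> ?S \<and> (\<forall>k\<in>\<alpha>. minner (\<Theta> k) D = 0) \<and> psd (lower_block r Pbar D)
                 \<and> (\<forall>D'. D' \<in> ?S \<and> (\<forall>k\<in>\<alpha>. minner (\<Theta> k) D' = 0) \<and> psd (lower_block r Pbar D')
                        \<longrightarrow> limit_obj \<Theta> \<beta> p f Xbar D \<le> limit_obj \<Theta> \<beta> p f Xbar D')"
    then have DK: "D \<in> ?K" unfolding Kmem by blast
    have "phi \<Theta> \<beta> p ?G D \<le> phi \<Theta> \<beta> p ?G Dh" using a Dh unfolding Kmem lo by blast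
    moreover have "phi \<Theta> \<beta> p ?G D \<ge> phi \<Theta> \<beta> p ?G Dh + c * (norm (D - Dh))\<^sup>2" using strong DK by blast
    ultimately have "c * (norm (D - Dh))\<^sup>2 \<le> 0" by simp
    then have "norm (D - Dh) = 0" using c by (simp add: mult_le_0_iff)
    then show "D = Dh" by simp
  qed
  have part3: "conv_prob M (\<lambda>m w. (1 / \<rho> m) *\<^sub>R (Xh m w - Xbar)) Dh"
    unfolding conv_prob_def
  proof (intro allI impI)
    fix e :: real assume e: "e > 0"
    have mdl: "model M \<omega> \<xi> p \<beta>"
      unfolding model_def model_axioms_def using prob \<omega>_rv \<xi>_rv indep \<omega>_dist_beta \<xi>_int \<xi>_mean \<xi>_var by blast
    interpret mdl: model M \<omega> \<xi> p \<beta> by (rule mdl)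
    have [measurable]: "\<omega> i \<in> measurable M (count_space UNIV)" for i using \<omega>_rv by blast
    have [measurable]: "\<xi> i \<in> borel_measurable M" for i using \<xi>_rv by blast
    have [measurable]: "\<gamma> m \<in> borel_measurable M" for m using \<gamma>_rv by blast
    have [measurable]: "Xt m \<in> borel_measurable M" for m using Xt_rv by blast
    obtain X0 where X0: "X0 \<in> ?S" "pd X0" "\<forall>k\<in>\<alpha>. minner (\<Theta> k) X0 = minner (\<Theta> k) Xbar"
      using slater by blast
    let ?E = "X0 - Xbar"
    let ?phi = "phi \<Theta> \<beta> p ?G"
    define \<tau> where "\<tau> = c * e\<^sup>2 / 16"
    have tau: "\<tau> > 0" unfolding \<tau>_def using c e by simp
    have "isCont (\<lambda>x. ?phi (Dh + x *\<^sub>R ?E)) 0" unfolding phi_def qf_def by (intro continuous_intros)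
    then obtain \<delta> where dl: "\<delta> > 0" "\<forall>x. dist x 0 < \<delta> \<longrightarrow> dist (?phi (Dh + x *\<^sub>R ?E)) (?phi (Dh + 0 *\<^sub>R ?E)) < \<tau>"
      using tau unfolding continuous_at_eps_delta by blast
    define \<epsilon> where "\<epsilon> = \<delta> / 2"
    have eps: "\<epsilon> > 0" using dl by (simp add: \<epsilon>_def)
    define H where "H = Dh + \<epsilon> *\<^sub>R ?E"
    have phiH: "?phi H - ?phi Dh \<le> \<tau>"
    proof -
      have "dist \<epsilon> 0 < \<delta>" using dl eps by (simp add: \<epsilon>_def)
      then have "dist (?phi H) (?phi Dh) < \<tau>" using dl(2) unfolding H_def by fastforce
      then show ?thesis by (simp add: dist_real_def)
    qed
    obtain t0 where t0: "t0 > 0" "\<forall>t. 0 \<le> t \<and> t \<le> t0 \<longrightarrow> psd (Xbar + t *\<^sub>R H)"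
      using approx[OF Pbar_unitary Xbar_decomp z lm(1) lm(2) Xbar_S Dh X0(1) X0(2) eps] unfolding H_def by blast
    have DhS: "Dh \<in> ?S" and Dhal: "\<forall>k\<in>\<alpha>. \<Theta> k \<bullet> Dh = 0" using Dh unfolding Kset_alt by auto
    have HS: "H \<in> ?S" unfolding H_def using DhS X0(1) Xbar_S by (intro Sn_add Sn_scaleR Sn_diff)
    have Hal: "\<forall>k\<in>\<alpha>. \<Theta> k \<bullet> H = 0"
      using Dhal X0(3) unfolding H_def by (simp add: inner_add_right inner_diff_right minner_inner)
    define BB where "BB = (norm H)\<^sup>2 + 2 * (norm Dh)\<^sup>2 + 1"
    define CC where "CC = norm H + norm Dh + 1"
    have "(norm H)\<^sup>2 + 2 * (norm Dh)\<^sup>2 \<ge> 0" by simp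
    then have BB: "BB > 0" "BB \<ge> (norm H)\<^sup>2 + 2 * (norm Dh)\<^sup>2" unfolding BB_def by linarith+
    have "norm H + norm Dh \<ge> 0" by simp
    then have CC: "CC > 0" "CC \<ge> norm H + norm Dh" unfolding CC_def by linarith+
    define a0 where "a0 = min (c / 4) (c * e\<^sup>2 / (32 * BB))"
    define b0 where "b0 = min (c * e / 4) (c * e\<^sup>2 / (32 * CC))"
    have a0: "a0 > 0" "a0 \<le> c / 4" "a0 * BB \<le> c * e\<^sup>2 / 32"
      unfolding a0_def using c e BB by (auto simp: min_def field_simps)
    have b0: "b0 > 0" "b0 \<le> c * e / 4" "b0 * CC \<le> c * e\<^sup>2 / 32"
      unfolding b0_def using c e CC by (auto simp: min_def field_simps)
    have T0: "?phi H - ?phi Dh + a0 * (norm H)\<^sup>2 + b0 * norm H + 2 * a0 * (norm Dh)\<^sup>2 + b0 * norm Dh \<le> c * e\<^sup>2 / 8"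
    proof -
      have "a0 * ((norm H)\<^sup>2 + 2 * (norm Dh)\<^sup>2) \<le> a0 * BB" using a0 BB by (intro mult_left_mono) auto
      moreover have "b0 * (norm H + norm Dh) \<le> b0 * CC" using b0 CC by (intro mult_left_mono) auto
      ultimately show ?thesis using phiH a0(3) b0(3) unfolding \<tau>_def by (simp add: algebra_simps)
    qed
    define nb where "nb = real (card \<beta>)"
    have nb: "nb > 0"
    proof -
      have "\<beta> \<noteq> {}" using p_sum by auto
      then show ?thesis using finb by (simp add: nb_def card_gt_0_iff)
    qed
    define s2 where "s2 = a0 / nb"
    define s4 where "s4 = b0 / (3 * \<nu> * nb)"
    have s2: "s2 > 0" and s4: "s4 > 0" unfolding s2_def s4_def using a0 b0 nb \<nu>_pos by auto
    obtain \<eta> where eta: "\<eta> > 0" "\<forall>X\<in>{X\<in>?S. psd X}. dist X Xbar < \<eta> \<longrightarrow> dist (spectral_op f X) (spectral_op f Xbar) < b0 / 3"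
      using F_cont b0(1) unfolding continuous_within_eps_delta by (meson divide_pos_pos zero_less_numeral)
    have incl: "dist ((1 / \<rho> m) *\<^sub>R (Xh m w - Xbar)) Dh \<le> e"
      if m0: "0 < m" and K: "0 < K" and rt: "\<rho> m \<le> t0" and rK: "\<rho> m * K \<le> a0" and w: "w \<in> space M"
        and n1: "\<forall>i<m. \<omega> i w \<in> \<beta>"
        and n2: "\<forall>k\<in>\<beta>. \<bar>(\<Sum>i<m. if \<omega> i w = k then 1 else 0) / real m - p k\<bar> \<le> s2"
        and n3: "\<bar>\<gamma> m w\<bar> \<le> K"
        and n4: "\<forall>k\<in>\<beta>. \<bar>(\<Sum>i<m. if \<omega> i w = k then \<xi> i w else 0) / (real m * \<rho> m)\<bar> \<le> s4"
        and n5: "dist (Xt m w) Xbar \<le> \<eta> / 2"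
        and n6: "dist (Xt m w) Xbar \<le> b0 / (3 * K)"
      for m K w
    proof -
      have r: "\<rho> m > 0" using \<rho>_pos by blast
      have g: "\<gamma> m w \<ge> 0" using \<gamma>_nonneg w by blast
      have Hpsd: "psd (Xbar + \<rho> m *\<^sub>R H)" using t0(2) r rt by auto
      have aA: "1/2 * (\<Sum>k\<in>\<beta>. \<bar>cnt (\<lambda>i. \<omega> i w) m k / real m - p k\<bar>) + \<rho> m * \<gamma> m w / 2 \<le> a0"
      proof -
        have "(\<Sum>k\<in>\<beta>. \<bar>cnt (\<lambda>i. \<omega> i w) m k / real m - p k\<bar>) \<le> (\<Sum>k\<in>\<beta>. s2)"
          using n2 unfolding cnt_def by (intro sum_mono) auto
        also have "\<dots> = a0" using nb unfolding s2_def nb_def by simp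
        finally have A: "(\<Sum>k\<in>\<beta>. \<bar>cnt (\<lambda>i. \<omega> i w) m k / real m - p k\<bar>) \<le> a0" .
        have "\<rho> m * \<gamma> m w \<le> \<rho> m * K" using n3 g r by (intro mult_left_mono) auto
        then have "\<rho> m * \<gamma> m w \<le> a0" using rK by linarith
        then show ?thesis using A by simp
      qed
      have bB: "\<nu> * (\<Sum>k\<in>\<beta>. \<bar>nse (\<lambda>i. \<omega> i w) (\<lambda>i. \<xi> i w) m k / (real m * \<rho> m)\<bar>)
          + norm ((mat 1 - spectral_op f (Xt m w)) - ?G) + \<gamma> m w * norm (Xbar - Xt m w) \<le> b0"
      proof -
        have "(\<Sum>k\<in>\<beta>. \<bar>nse (\<lambda>i. \<omega> i w) (\<lambda>i. \<xi> i w) m k / (real m * \<rho> m)\<bar>) \<le> (\<Sum>k\<in>\<beta>. s4)"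
          using n4 unfolding nse_def by (intro sum_mono) auto
        also have "\<dots> = b0 / (3 * \<nu>)" using nb \<nu>_pos unfolding s4_def nb_def by simp
        finally have "\<nu> * (\<Sum>k\<in>\<beta>. \<bar>nse (\<lambda>i. \<omega> i w) (\<lambda>i. \<xi> i w) m k / (real m * \<rho> m)\<bar>) \<le> \<nu> * (b0 / (3 * \<nu>))"
          using \<nu>_pos by (intro mult_left_mono) auto
        then have B1: "\<nu> * (\<Sum>k\<in>\<beta>. \<bar>nse (\<lambda>i. \<omega> i w) (\<lambda>i. \<xi> i w) m k / (real m * \<rho> m)\<bar>) \<le> b0 / 3"
          using \<nu>_pos by simp
        have "Xt m w \<in> {X\<in>?S. psd X}" using Xt_psd w by blast
        moreover have "dist (Xt m w) Xbar < \<eta>" using n5 eta(1) by linarith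
        ultimately have "dist (spectral_op f (Xt m w)) (spectral_op f Xbar) < b0 / 3" using eta(2) by blast
        moreover have "norm ((mat 1 - spectral_op f (Xt m w)) - ?G) = dist (spectral_op f (Xt m w)) (spectral_op f Xbar)"
          by (simp add: dist_norm norm_minus_commute)
        ultimately have B2: "norm ((mat 1 - spectral_op f (Xt m w)) - ?G) \<le> b0 / 3" by simp
        have "\<gamma> m w * norm (Xbar - Xt m w) \<le> K * (b0 / (3 * K))"
          using n3 n6 g by (intro mult_mono) (auto simp: dist_norm norm_minus_commute)
        then have B3: "\<gamma> m w * norm (Xbar - Xt m w) \<le> b0 / 3" using K by simp
        show ?thesis using B1 B2 B3 by simp
      qed
      have "norm ((1 / \<rho> m) *\<^sub>R (Xh m w - Xbar) - Dh) \<le> e"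
      proof (rule detC[OF r m0 g \<nu>_pos basis_orth bsub finb n1 Pbar_unitary Xbar_decomp z Xbar_S _ _ HS Hal Hpsd Dh strong c e aA bB a0(2) b0(2) T0])
        show "Xh m w \<in> ?S \<and> psd (Xh m w) \<and> (\<forall>k\<in>\<alpha>. minner (\<Theta> k) (Xh m w) = minner (\<Theta> k) Xbar)"
          using Xh_opt w by blast
        show "\<forall>X. X \<in> ?S \<and> psd X \<and> (\<forall>k\<in>\<alpha>. minner (\<Theta> k) X = minner (\<Theta> k) Xbar) \<longrightarrow>
          est_obj \<Theta> f m (\<lambda>i. minner (\<Theta> (\<omega> i w)) Xbar + \<nu> * \<xi> i w) (\<lambda>i. \<omega> i w) (\<rho> m) (\<gamma> m w) (Xt m w) (Xh m w)
          \<le> est_obj \<Theta> f m (\<lambda>i. minner (\<Theta> (\<omega> i w)) Xbar + \<nu> * \<xi> i w) (\<lambda>i. \<omega> i w) (\<rho> m) (\<gamma> m w) (Xt m w) X"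
          using Xh_opt w by blast
      qed
      then show ?thesis by (simp add: dist_norm)
    qed
    show "(\<lambda>m. measure M {w\<in>space M. e < dist ((1 / \<rho> m) *\<^sub>R (Xh m w - Xbar)) Dh}) \<longlonglongrightarrow> 0"
    proof (rule LIMSEQ_I)
      fix \<epsilon>0 :: real assume ep0: "0 < \<epsilon>0"
      define \<epsilon>' where "\<epsilon>' = \<epsilon>0 / 8"
      have ep: "\<epsilon>' > 0" unfolding \<epsilon>'_def using ep0 by simp
      obtain K1 N1 where KN: "\<forall>m\<ge>N1. measure M {w\<in>space M. \<bar>\<gamma> m w\<bar> > K1} < \<epsilon>'"
        using \<gamma>_Op1 ep unfolding bounded_prob_def by blast
      define K where "K = max K1 1"
      have K: "K > 0" "K \<ge> K1" unfolding K_def by auto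
      have ev1: "eventually (\<lambda>m. \<rho> m \<le> t0 \<and> \<rho> m * K \<le> a0) sequentially"
      proof -
        have "min t0 (a0 / K) > 0" using t0(1) a0(1) K(1) by simp
        then have "eventually (\<lambda>m. \<rho> m < min t0 (a0 / K)) sequentially"
          using order_tendstoD(2)[OF \<rho>_lim] by blast
        then show ?thesis
        proof (rule eventually_mono)
          fix m assume "\<rho> m < min t0 (a0 / K)"
          then have "\<rho> m < t0" "\<rho> m < a0 / K" by auto
          then show "\<rho> m \<le> t0 \<and> \<rho> m * K \<le> a0" using K(1) by (simp add: less_divide_eq)
        qed
      qed
      have ev2: "eventually (\<lambda>m. m \<ge> max N1 1) sequentially" by (rule eventually_ge_at_top)
      have ev3: "eventually (\<lambda>m. (nb / s2\<^sup>2) / real m < \<epsilon>') sequentially"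
      proof -
        have "((\<lambda>m. (nb / s2\<^sup>2) / real m) \<longlongrightarrow> 0) sequentially"
          by (intro tendsto_divide_0[OF tendsto_const] filterlim_at_top_imp_at_infinity filterlim_real_sequentially)
        then show ?thesis using order_tendstoD(2) ep by blast
      qed
      have ev4: "eventually (\<lambda>m. (nb / s4\<^sup>2) / (real m * (\<rho> m)\<^sup>2) < \<epsilon>') sequentially"
      proof -
        have "filterlim (\<lambda>m. (sqrt (real m) * \<rho> m) ^ 2) at_top sequentially"
          by (rule filterlim_pow_at_top[OF _ \<rho>_sqrt]) simp
        moreover have "(\<lambda>m. (sqrt (real m) * \<rho> m) ^ 2) = (\<lambda>m. real m * (\<rho> m)\<^sup>2)"
          by (rule ext) (simp add: power_mult_distrib)
        ultimately have "filterlim (\<lambda>m. real m * (\<rho> m)\<^sup>2) at_top sequentially" by simp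
        then have "((\<lambda>m. (nb / s4\<^sup>2) / (real m * (\<rho> m)\<^sup>2)) \<longlongrightarrow> 0) sequentially"
          by (intro tendsto_divide_0[OF tendsto_const] filterlim_at_top_imp_at_infinity)
        then show ?thesis using order_tendstoD(2) ep by blast
      qed
      have ev5: "eventually (\<lambda>m. measure M {w\<in>space M. dist (Xt m w) Xbar > \<eta> / 2} < \<epsilon>') sequentially"
      proof -
        have "\<eta> / 2 > 0" using eta(1) by simp
        then have "(\<lambda>m. measure M {w\<in>space M. dist (Xt m w) Xbar > \<eta> / 2}) \<longlonglongrightarrow> 0"
          using Xt_conv unfolding conv_prob_def by blast
        then show ?thesis using order_tendstoD(2) ep by blast
      qed
      have ev6: "eventually (\<lambda>m. measure M {w\<in>space M. dist (Xt m w) Xbar > b0 / (3 * K)} < \<epsilon>') sequentially"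
      proof -
        have "b0 / (3 * K) > 0" using b0(1) K(1) by simp
        then have "(\<lambda>m. measure M {w\<in>space M. dist (Xt m w) Xbar > b0 / (3 * K)}) \<longlonglongrightarrow> 0"
          using Xt_conv unfolding conv_prob_def by blast
        then show ?thesis using order_tendstoD(2) ep by blast
      qed
      have "eventually (\<lambda>m. (\<rho> m \<le> t0 \<and> \<rho> m * K \<le> a0) \<and> m \<ge> max N1 1 \<and> (nb / s2\<^sup>2) / real m < \<epsilon>'
           \<and> (nb / s4\<^sup>2) / (real m * (\<rho> m)\<^sup>2) < \<epsilon>'
           \<and> measure M {w\<in>space M. dist (Xt m w) Xbar > \<eta> / 2} < \<epsilon>'
           \<and> measure M {w\<in>space M. dist (Xt m w) Xbar > b0 / (3 * K)} < \<epsilon>') sequentially"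
        by (rule eventually_conj[OF ev1 eventually_conj[OF ev2 eventually_conj[OF ev3 eventually_conj[OF ev4 eventually_conj[OF ev5 ev6]]]]])
      then obtain N where N: "\<And>m. m \<ge> N \<Longrightarrow> (\<rho> m \<le> t0 \<and> \<rho> m * K \<le> a0) \<and> m \<ge> max N1 1 \<and> (nb / s2\<^sup>2) / real m < \<epsilon>'
           \<and> (nb / s4\<^sup>2) / (real m * (\<rho> m)\<^sup>2) < \<epsilon>'
           \<and> measure M {w\<in>space M. dist (Xt m w) Xbar > \<eta> / 2} < \<epsilon>'
           \<and> measure M {w\<in>space M. dist (Xt m w) Xbar > b0 / (3 * K)} < \<epsilon>'"
        unfolding eventually_sequentially by blast
      show "\<exists>no. \<forall>m\<ge>no. norm (measure M {w\<in>space M. e < dist ((1 / \<rho> m) *\<^sub>R (Xh m w - Xbar)) Dh} - 0) < \<epsilon>0"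
      proof (intro exI allI impI)
        fix m assume mN: "m \<ge> N"
        note Nm = N[OF mN]
        have m0: "0 < m" using Nm by simp
        have rm: "\<rho> m > 0" using \<rho>_pos by blast
        define B1 where "B1 = {w\<in>space M. \<exists>i<m. \<omega> i w \<notin> \<beta>}"
        define B2 where "B2 = (\<Union>k\<in>\<beta>. {w\<in>space M. \<bar>(\<Sum>i<m. if \<omega> i w = k then 1 else 0) / real m - p k\<bar> > s2})"
        define B3 where "B3 = {w\<in>space M. \<bar>\<gamma> m w\<bar> > K}"
        define B4 where "B4 = (\<Union>k\<in>\<beta>. {w\<in>space M. \<bar>(\<Sum>i<m. if \<omega> i w = k then \<xi> i w else 0) / (real m * \<rho> m)\<bar> > s4})"
        define B5 where "B5 = {w\<in>space M. dist (Xt m w) Xbar > \<eta> / 2}"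
        define B6 where "B6 = {w\<in>space M. dist (Xt m w) Xbar > b0 / (3 * K)}"
        have sB1: "B1 \<in> sets M"
        proof -
          have "B1 = (\<Union>i\<in>{..<m}. {w\<in>space M. \<omega> i w \<notin> \<beta>})" unfolding B1_def by auto
          also have "\<dots> \<in> sets M" by (intro sets.finite_UN) auto
          finally show ?thesis .
        qed
        have sB2: "B2 \<in> sets M" unfolding B2_def using finb by (intro sets.finite_UN) auto
        have sB3: "B3 \<in> sets M" unfolding B3_def by measurable
        have sB4: "B4 \<in> sets M" unfolding B4_def using finb by (intro sets.finite_UN) auto
        have sB5: "B5 \<in> sets M" unfolding B5_def by measurable
        have sB6: "B6 \<in> sets M" unfolding B6_def by measurable
        have sub: "{w\<in>space M. e < dist ((1 / \<rho> m) *\<^sub>R (Xh m w - Xbar)) Dh} \<subseteq> B1 \<union> B2 \<union> B3 \<union> B4 \<union> B5 \<union> B6"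
        proof
          fix w assume wA: "w \<in> {w\<in>space M. e < dist ((1 / \<rho> m) *\<^sub>R (Xh m w - Xbar)) Dh}"
          then have w: "w \<in> space M" and gt: "e < dist ((1 / \<rho> m) *\<^sub>R (Xh m w - Xbar)) Dh" by auto
          show "w \<in> B1 \<union> B2 \<union> B3 \<union> B4 \<union> B5 \<union> B6"
          proof (rule ccontr)
            assume "w \<notin> B1 \<union> B2 \<union> B3 \<union> B4 \<union> B5 \<union> B6"
            then have n: "w \<notin> B1" "w \<notin> B2" "w \<notin> B3" "w \<notin> B4" "w \<notin> B5" "w \<notin> B6" by auto
            have "dist ((1 / \<rho> m) *\<^sub>R (Xh m w - Xbar)) Dh \<le> e"
            proof (rule incl[OF m0 K(1) _ _ w])
              show "\<rho> m \<le> t0" "\<rho> m * K \<le> a0" using Nm by auto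
              show "\<forall>i<m. \<omega> i w \<in> \<beta>" using n(1) w unfolding B1_def by auto
              show "\<forall>k\<in>\<beta>. \<bar>(\<Sum>i<m. if \<omega> i w = k then 1 else 0) / real m - p k\<bar> \<le> s2"
                using n(2) w unfolding B2_def by (auto simp: not_less)
              show "\<bar>\<gamma> m w\<bar> \<le> K" using n(3) w unfolding B3_def by (auto simp: not_less)
              show "\<forall>k\<in>\<beta>. \<bar>(\<Sum>i<m. if \<omega> i w = k then \<xi> i w else 0) / (real m * \<rho> m)\<bar> \<le> s4"
                using n(4) w unfolding B4_def by (auto simp: not_less)
              show "dist (Xt m w) Xbar \<le> \<eta> / 2" using n(5) w unfolding B5_def by (auto simp: not_less)
              show "dist (Xt m w) Xbar \<le> b0 / (3 * K)" using n(6) w unfolding B6_def by (auto simp: not_less)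
            qed
            then show False using gt by simp
          qed
        qed
        have m1: "measure M B1 = 0" unfolding B1_def by (rule mdl.omega_in_beta[OF finb p_sum])
        have m2: "measure M B2 \<le> (nb / s2\<^sup>2) / real m"
        proof -
          have "measure M B2 \<le> (\<Sum>k\<in>\<beta>. measure M {w\<in>space M. \<bar>(\<Sum>i<m. if \<omega> i w = k then 1 else 0) / real m - p k\<bar> > s2})"
            unfolding B2_def by (rule measure_UNION_le) (use finb in auto)
          also have "\<dots> \<le> (\<Sum>k\<in>\<beta>. 1 / (real m * s2\<^sup>2))"
            by (intro sum_mono mdl.lln_cnt m0 s2) auto
          also have "\<dots> = (nb / s2\<^sup>2) / real m" unfolding nb_def by simp
          finally show ?thesis .
        qed
        have m3: "measure M B3 < \<epsilon>'"
        proof -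
          have "measure M B3 \<le> measure M {w\<in>space M. \<bar>\<gamma> m w\<bar> > K1}"
            unfolding B3_def using K(2) by (intro mdl.finite_measure_mono) (auto, measurable)
          also have "\<dots> < \<epsilon>'" using KN Nm by auto
          finally show ?thesis .
        qed
        have m4: "measure M B4 \<le> (nb / s4\<^sup>2) / (real m * (\<rho> m)\<^sup>2)"
        proof -
          have "measure M B4 \<le> (\<Sum>k\<in>\<beta>. measure M {w\<in>space M. \<bar>(\<Sum>i<m. if \<omega> i w = k then \<xi> i w else 0) / (real m * \<rho> m)\<bar> > s4})"
            unfolding B4_def by (rule measure_UNION_le) (use finb in auto)
          also have "\<dots> \<le> (\<Sum>k\<in>\<beta>. 1 / (real m * (\<rho> m)\<^sup>2 * s4\<^sup>2))"
            by (intro sum_mono mdl.lln_nse m0 s4 rm)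
          also have "\<dots> = (nb / s4\<^sup>2) / (real m * (\<rho> m)\<^sup>2)" unfolding nb_def by (simp add: mult_ac)
          finally show ?thesis .
        qed
        have m5: "measure M B5 < \<epsilon>'" unfolding B5_def using Nm by simp
        have m6: "measure M B6 < \<epsilon>'" unfolding B6_def using Nm by simp
        have "measure M {w\<in>space M. e < dist ((1 / \<rho> m) *\<^sub>R (Xh m w - Xbar)) Dh} \<le> measure M (B1 \<union> B2 \<union> B3 \<union> B4 \<union> B5 \<union> B6)"
          using sub sB1 sB2 sB3 sB4 sB5 sB6 by (intro mdl.finite_measure_mono) auto
        also have "\<dots> \<le> measure M B1 + measure M B2 + measure M B3 + measure M B4 + measure M B5 + measure M B6"
        proof -
          have "measure M (B1 \<union> B2 \<union> B3 \<union> B4 \<union> B5 \<union> B6) \<le> measure M (B1 \<union> B2 \<union> B3 \<union> B4 \<union> B5) + measure M B6"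
            using sB1 sB2 sB3 sB4 sB5 sB6 by (intro measure_Un_le) auto
          moreover have "measure M (B1 \<union> B2 \<union> B3 \<union> B4 \<union> B5) \<le> measure M (B1 \<union> B2 \<union> B3 \<union> B4) + measure M B5"
            using sB1 sB2 sB3 sB4 sB5 by (intro measure_Un_le) auto
          moreover have "measure M (B1 \<union> B2 \<union> B3 \<union> B4) \<le> measure M (B1 \<union> B2 \<union> B3) + measure M B4"
            using sB1 sB2 sB3 sB4 by (intro measure_Un_le) auto
          moreover have "measure M (B1 \<union> B2 \<union> B3) \<le> measure M (B1 \<union> B2) + measure M B3"
            using sB1 sB2 sB3 by (intro measure_Un_le) auto
          moreover have "measure M (B1 \<union> B2) \<le> measure M B1 + measure M B2"
            using sB1 sB2 by (intro measure_Un_le) auto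
          ultimately show ?thesis by linarith
        qed
        also have "\<dots> < 6 * \<epsilon>'"
        proof -
          have "(nb / s2\<^sup>2) / real m < \<epsilon>'" "(nb / s4\<^sup>2) / (real m * (\<rho> m)\<^sup>2) < \<epsilon>'" using Nm by auto
          then show ?thesis using m1 m2 m3 m4 m5 m6 ep by linarith
        qed
        finally have "measure M {w\<in>space M. e < dist ((1 / \<rho> m) *\<^sub>R (Xh m w - Xbar)) Dh} < \<epsilon>0"
          unfolding \<epsilon>'_def using ep0 by linarith
        then show "norm (measure M {w\<in>space M. e < dist ((1 / \<rho> m) *\<^sub>R (Xh m w - Xbar)) Dh} - 0) < \<epsilon>0"
          by simp
      qed
    qed
  qed
  show ?thesis using part1 part2 part3 by blast
qed

end
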